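(* For all $d,K\in\mathbb{Z}_{++}$, if $(X_t)_{t\ge0}$ is generated by the binary AR(K) process, then for all $T\in\mathbb{Z}_{++}$, $$\mathcal{L}_T\le\frac{dK}{2T}\Big(1+\ln\Big(1+\frac{T}{4dK}\Big)\Big).$$
   Context: Binary AR(K) process: $\Phi_0,\Phi_1\in\mathbb{R}^d$ are known vectors with $\|\Phi_0\|_2=\|\Phi_1\|_2=1$, and $\phi_t:=\Phi_{X_t}$. The parameters $\theta_1,\ldots,\theta_K$ are i.i.d. $\mathcal{N}(0,I_d/K)$. $(X_0,\ldots,X_{K-1})$ is uniform on $\{0,1\}^K$ and independent of $\theta_{1:K}$. For $t\ge K-1$, conditionally on $(\theta_{1:K},X_{0:t})$, $X_{t+1}=1$ with probability $\sigma\big(\sum_{k=1}^K\theta_k^\top\phi_{t-k+1}\big)$ and $X_{t+1}=0$ otherwise, where $\sigma(z)=1/(1+e^{-z})$. With $H_t=(X_0,\ldots,X_t)$, the estimation error is $$\mathcal{L}_T=\frac1T\sum_{t=0}^{T-1}\mathbb{E}\big[\mathrm{d}_{\mathrm{KL}}(\mathbb{P}(X_{t+1}\in\cdot\mid\theta_{1:K},H_t)\,\|\,\mathbb{P}(X_{t+1}\in\cdot\mid H_t))\big].$$ *)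

theory Defs
  imports "HOL-Probability.Probability"
begin

text \<open>Binary AR(K) process. Histories are bool lists h = [X_0, ..., X_t];
  True encodes the symbol 1, False the symbol 0.\<close>

definition sigmoid :: "real \<Rightarrow> real" where
  "sigmoid z = 1 / (1 + exp (- z))"

definition feat :: "real^'d \<Rightarrow> real^'d \<Rightarrow> bool \<Rightarrow> real^'d" where
  "feat \<Phi>0 \<Phi>1 b = (if b then \<Phi>1 else \<Phi>0)"

definition gauss_prior :: "nat \<Rightarrow> (real^'d) measure" where
  "gauss_prior K = density lborel
     (\<lambda>x. ennreal (\<Prod>i\<in>UNIV. normal_density 0 (1 / sqrt (real K)) (x $ i)))"

definition theta_prior :: "nat \<Rightarrow> (nat \<Rightarrow> real^'d) measure" where
  "theta_prior K = PiM {1..K} (\<lambda>_. gauss_prior K)"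

text \<open>For t >= K-1: P(X_{t+1} = 1 | theta, H_t = h) with h of length t+1.\<close>
definition ar_prob :: "real^'d \<Rightarrow> real^'d \<Rightarrow> nat \<Rightarrow> (nat \<Rightarrow> real^'d) \<Rightarrow> bool list \<Rightarrow> nat \<Rightarrow> real" where
  "ar_prob \<Phi>0 \<Phi>1 K \<theta> h t =
     sigmoid (\<Sum>k=1..K. \<theta> k \<bullet> feat \<Phi>0 \<Phi>1 (h ! (t + 1 - k)))"

text \<open>P(X_{t+1} = 1 | theta, H_t = h) for all t, where t + 1 = length h
  (for t < K-1 the next symbol is part of the uniform initial block).\<close>
definition next_prob :: "real^'d \<Rightarrow> real^'d \<Rightarrow> nat \<Rightarrow> (nat \<Rightarrow> real^'d) \<Rightarrow> bool list \<Rightarrow> real" where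
  "next_prob \<Phi>0 \<Phi>1 K \<theta> h =
     (let t = length h - 1 in if K - 1 \<le> t then ar_prob \<Phi>0 \<Phi>1 K \<theta> h t else 1 / 2)"

text \<open>P(H_t = h | theta), h of length t+1 >= 1.\<close>
definition hist_lik :: "real^'d \<Rightarrow> real^'d \<Rightarrow> nat \<Rightarrow> (nat \<Rightarrow> real^'d) \<Rightarrow> bool list \<Rightarrow> real" where
  "hist_lik \<Phi>0 \<Phi>1 K \<theta> h =
     (1 / 2) ^ (min K (length h)) *
     (\<Prod>s\<in>{K - 1..<length h - 1}.
        (if h ! (s + 1) then ar_prob \<Phi>0 \<Phi>1 K \<theta> (take (s + 1) h) s
         else 1 - ar_prob \<Phi>0 \<Phi>1 K \<theta> (take (s + 1) h) s))"

definition pred_prob :: "real^'d \<Rightarrow> real^'d \<Rightarrow> nat \<Rightarrow> bool list \<Rightarrow> real" where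
  "pred_prob \<Phi>0 \<Phi>1 K h =
     (\<integral>\<theta>. hist_lik \<Phi>0 \<Phi>1 K \<theta> h * next_prob \<Phi>0 \<Phi>1 K \<theta> h \<partial>theta_prior K) /
     (\<integral>\<theta>. hist_lik \<Phi>0 \<Phi>1 K \<theta> h \<partial>theta_prior K)"

definition kl_bern :: "real \<Rightarrow> real \<Rightarrow> real" where
  "kl_bern a b = a * ln (a / b) + (1 - a) * ln ((1 - a) / (1 - b))"

text \<open>Estimation error L_T: the expectation over (theta, H_t) written out as
  sum over histories and integral over the prior.\<close>
definition est_error :: "real^'d \<Rightarrow> real^'d \<Rightarrow> nat \<Rightarrow> nat \<Rightarrow> real" where
  "est_error \<Phi>0 \<Phi>1 K T =
     (1 / real T) * (\<Sum>t<T. \<Sum>h\<in>{h :: bool list. length h = t + 1}.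
        \<integral>\<theta>. hist_lik \<Phi>0 \<Phi>1 K \<theta> h *
             kl_bern (next_prob \<Phi>0 \<Phi>1 K \<theta> h) (pred_prob \<Phi>0 \<Phi>1 K h) \<partial>theta_prior K)"

end

theory Submission
  imports Defs
begin

lemma vec_sum_basis_nth:
  fixes f :: "(real^'d) \<Rightarrow> real"
  shows "(\<Sum>b\<in>Basis. f b *\<^sub>R b) $ i = f (axis i 1)"
proof -
  have "(\<Sum>b\<in>Basis. f b *\<^sub>R b) $ i = (\<Sum>b\<in>Basis. f b * (b $ i))"
    by (simp add: sum_component)
  also have "\<dots> = (\<Sum>b\<in>(\<lambda>j. axis j 1) ` UNIV. f b * (b $ i))"
    by (rule sum.cong) (auto simp: Basis_vec_def)
  also have "\<dots> = (\<Sum>j\<in>UNIV. f (axis j 1) * (axis j (1::real) $ i))"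
    by (subst sum.reindex) (auto simp: inj_on_def axis_eq_axis)
  also have "\<dots> = (\<Sum>j\<in>UNIV. if j = i then f (axis j 1) else 0)"
    by (rule sum.cong) (auto simp: axis_def)
  also have "\<dots> = f (axis i 1)"
    by simp
  finally show ?thesis .
qed

lemma prod_basis_vec:
  fixes H :: "(real^'d) \<Rightarrow> real"
  shows "(\<Prod>b\<in>Basis. H b) = (\<Prod>i\<in>UNIV. H (axis i 1))"
proof -
  have "(\<Prod>b\<in>Basis. H b) = (\<Prod>b\<in>(\<lambda>j. axis j 1) ` UNIV. H b)"
    by (rule prod.cong) (auto simp: Basis_vec_def)
  also have "\<dots> = (\<Prod>j\<in>UNIV. H (axis j 1))"
    by (subst prod.reindex) (auto simp: inj_on_def axis_eq_axis)
  finally show ?thesis .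
qed

lemma lborel_vec_prod:
  fixes h :: "'d::finite \<Rightarrow> real \<Rightarrow> real"
  assumes h: "\<And>i. integrable lborel (h i)"
  shows "integrable (lborel :: (real^'d) measure) (\<lambda>x. \<Prod>i\<in>UNIV. h i (x $ i))"
    and "(\<integral>x. (\<Prod>i\<in>UNIV. h i (x $ i)) \<partial>(lborel :: (real^'d) measure)) = (\<Prod>i\<in>UNIV. \<integral>x. h i x \<partial>lborel)"
proof -
  define ix :: "real^'d \<Rightarrow> 'd" where "ix = inv (\<lambda>j. axis j 1)"
  have ix: "ix (axis i 1) = i" for i
    unfolding ix_def by (rule inv_f_f) (auto simp: inj_on_def axis_eq_axis)
  define H where "H b = h (ix b)" for b
  interpret P: product_sigma_finite "\<lambda>_::real^'d. lborel :: real measure" by standard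
  have eq: "(\<Prod>i\<in>UNIV. h i ((\<Sum>b\<in>Basis. f b *\<^sub>R b) $ i)) = (\<Prod>b\<in>Basis. H b (f b))" for f :: "real^'d \<Rightarrow> real"
    by (simp only: vec_sum_basis_nth prod_basis_vec H_def ix)
  have intH: "integrable lborel (H b)" for b unfolding H_def by (rule h)
  have meas: "(\<lambda>f. \<Sum>b\<in>Basis. f b *\<^sub>R b) \<in> measurable (\<Pi>\<^sub>M b\<in>Basis. lborel) (borel :: (real^'d) measure)"
    by measurable
  have m2: "(\<lambda>x::real^'d. \<Prod>i\<in>UNIV. h i (x $ i)) \<in> borel_measurable borel"
    using h by measurable
  show "integrable (lborel :: (real^'d) measure) (\<lambda>x. \<Prod>i\<in>UNIV. h i (x $ i))"
    apply (subst lborel_eq)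
    apply (subst integrable_distr_eq[OF meas m2])
    apply (simp only: eq)
    by (rule P.product_integrable_prod) (auto intro: intH)
  show "(\<integral>x. (\<Prod>i\<in>UNIV. h i (x $ i)) \<partial>(lborel :: (real^'d) measure)) = (\<Prod>i\<in>UNIV. \<integral>x. h i x \<partial>lborel)"
    apply (subst lborel_eq)
    apply (subst integral_distr[OF meas m2])
    apply (simp only: eq)
    apply (subst P.product_integral_prod)
      apply (auto intro: intH)
    apply (simp add: prod_basis_vec H_def ix)
    done
qed

definition sg :: "nat \<Rightarrow> real" where "sg K = 1 / sqrt (real K)"
definition NK :: "nat \<Rightarrow> real measure" where "NK K = density lborel (normal_density 0 (sg K))"

lemma sg_pos: "K > 0 \<Longrightarrow> sg K > 0" by (simp add: sg_def)

lemma gauss_prior_alt: "gauss_prior K = density lborel (\<lambda>x. \<Prod>i\<in>UNIV. normal_density 0 (sg K) (x $ i))"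
  unfolding gauss_prior_def sg_def by simp

lemma gauss_vec_prod:
  fixes g :: "'d::finite \<Rightarrow> real \<Rightarrow> real"
  assumes K: "K > 0" and g: "\<And>i. integrable (NK K) (g i)"
  shows "integrable (gauss_prior K :: (real^'d) measure) (\<lambda>x. \<Prod>i\<in>UNIV. g i (x $ i))"
    and "(\<integral>x. (\<Prod>i\<in>UNIV. g i (x $ i)) \<partial>(gauss_prior K :: (real^'d) measure)) = (\<Prod>i\<in>UNIV. \<integral>x. g i x \<partial>NK K)"
proof -
  have gm[measurable]: "g i \<in> borel_measurable borel" for i
    using borel_measurable_integrable[OF g[of i]] by (simp add: NK_def)
  have gi: "integrable lborel (\<lambda>x. normal_density 0 (sg K) x * g i x)" for i
    using g[of i] unfolding NK_def by (subst (asm) integrable_density) auto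
  have gI: "(\<integral>x. g i x \<partial>NK K) = (\<integral>x. normal_density 0 (sg K) x * g i x \<partial>lborel)" for i
    unfolding NK_def by (subst integral_density) auto
  have eq: "(\<lambda>x::real^'d. (\<Prod>i\<in>UNIV. normal_density 0 (sg K) (x $ i)) *\<^sub>R (\<Prod>i\<in>UNIV. g i (x $ i)))
      = (\<lambda>x. \<Prod>i\<in>UNIV. normal_density 0 (sg K) (x $ i) * g i (x $ i))"
    by (simp add: prod.distrib)
  have eq': "(\<lambda>x::real^'d. (\<Prod>i\<in>UNIV. normal_density 0 (sg K) (x $ i)) * (\<Prod>i\<in>UNIV. g i (x $ i)))
      = (\<lambda>x. \<Prod>i\<in>UNIV. normal_density 0 (sg K) (x $ i) * g i (x $ i))"
    by (simp add: prod.distrib)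
  show "integrable (gauss_prior K :: (real^'d) measure) (\<lambda>x. \<Prod>i\<in>UNIV. g i (x $ i))"
    unfolding gauss_prior_alt
    apply (subst integrable_density)
       apply (auto simp: prod_nonneg)
    apply (simp only: eq eq')
    by (rule lborel_vec_prod(1)[OF gi])
  show "(\<integral>x. (\<Prod>i\<in>UNIV. g i (x $ i)) \<partial>(gauss_prior K :: (real^'d) measure)) = (\<Prod>i\<in>UNIV. \<integral>x. g i x \<partial>NK K)"
    unfolding gauss_prior_alt
    apply (subst integral_density)
       apply (auto simp: prod_nonneg)
    apply (simp only: eq eq' gI)
    by (rule lborel_vec_prod(2)[OF gi])
qed

lemma prob_space_NK: "K > 0 \<Longrightarrow> prob_space (NK K)"
  unfolding NK_def by (rule prob_space_normal_density) (rule sg_pos)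

lemma prob_space_gauss_prior:
  assumes K: "K > 0" shows "prob_space (gauss_prior K :: (real^'d::finite) measure)"
proof
  interpret N: prob_space "NK K" by (rule prob_space_NK[OF K])
  have "integrable (gauss_prior K :: (real^'d) measure) (\<lambda>x. \<Prod>i\<in>UNIV. (\<lambda>_. 1::real) (x $ i))"
    by (rule gauss_vec_prod(1)[OF K]) auto
  have i1: "(\<integral>x. (\<Prod>i\<in>UNIV. (\<lambda>_. 1::real) (x $ i)) \<partial>(gauss_prior K :: (real^'d) measure)) = 1"
    by (subst gauss_vec_prod(2)[OF K]) (auto simp: N.prob_space)
  have "emeasure (gauss_prior K :: (real^'d) measure) (space (gauss_prior K)) = (\<integral>\<^sup>+x. ennreal 1 \<partial>(gauss_prior K :: (real^'d) measure))"
    by simp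
  also have "\<dots> = ennreal (\<integral>x. 1 \<partial>(gauss_prior K :: (real^'d) measure))"
    using i1 \<open>integrable _ _\<close> by (intro nn_integral_eq_integral) auto
  also have "\<dots> = 1" using i1 by (simp del: prod_constant)
  finally show "emeasure (gauss_prior K :: (real^'d) measure) (space (gauss_prior K)) = 1" .
qed

definition prodfun :: "nat \<Rightarrow> (nat \<Rightarrow> 'd \<Rightarrow> real \<Rightarrow> real) \<Rightarrow> (nat \<Rightarrow> real^'d) \<Rightarrow> real" where
  "prodfun K f \<theta> = (\<Prod>k\<in>{1..K}. \<Prod>i\<in>UNIV. f k i (\<theta> k $ i))"

lemma prob_space_theta_prior: "K > 0 \<Longrightarrow> prob_space (theta_prior K :: (nat \<Rightarrow> real^'d::finite) measure)"
  unfolding theta_prior_def by (intro prob_space_PiM prob_space_gauss_prior)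

lemma theta_prod:
  fixes f :: "nat \<Rightarrow> 'd::finite \<Rightarrow> real \<Rightarrow> real"
  assumes K: "K > 0" and f: "\<And>k i. integrable (NK K) (f k i)"
  shows "integrable (theta_prior K :: (nat \<Rightarrow> real^'d) measure) (prodfun K f)"
    and "(\<integral>\<theta>. prodfun K f \<theta> \<partial>(theta_prior K :: (nat \<Rightarrow> real^'d) measure)) = (\<Prod>k\<in>{1..K}. \<Prod>i\<in>UNIV. \<integral>x. f k i x \<partial>NK K)"
proof -
  interpret G: prob_space "gauss_prior K :: (real^'d) measure" by (rule prob_space_gauss_prior[OF K])
  interpret P: product_sigma_finite "\<lambda>_::nat. gauss_prior K :: (real^'d) measure" by standard
  have Fi: "integrable (gauss_prior K :: (real^'d) measure) (\<lambda>x. \<Prod>i\<in>UNIV. f k i (x $ i))" for k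
    by (rule gauss_vec_prod(1)[OF K f])
  show "integrable (theta_prior K :: (nat \<Rightarrow> real^'d) measure) (prodfun K f)"
    unfolding theta_prior_def prodfun_def
    by (rule P.product_integrable_prod[where f="\<lambda>k x. \<Prod>i\<in>UNIV. f k i (x $ i)", simplified]) (auto intro: Fi)
  show "(\<integral>\<theta>. prodfun K f \<theta> \<partial>(theta_prior K :: (nat \<Rightarrow> real^'d) measure)) = (\<Prod>k\<in>{1..K}. \<Prod>i\<in>UNIV. \<integral>x. f k i x \<partial>NK K)"
    unfolding theta_prior_def prodfun_def
    apply (subst P.product_integral_prod[where f="\<lambda>k x. \<Prod>i\<in>UNIV. f k i (x $ i)", simplified])
      apply (auto intro: Fi)
    apply (rule prod.cong, simp)
    by (rule gauss_vec_prod(2)[OF K f])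
qed

section \<open>1D Gaussian facts\<close>

lemma nd_m0: "0 < s \<Longrightarrow> has_bochner_integral lborel (\<lambda>x. normal_density a s x) 1"
  using normal_moment_even[of s a 0] by simp

lemma nd_m1: "0 < s \<Longrightarrow> has_bochner_integral lborel (\<lambda>x. normal_density a s x * (x - a)) 0"
  using normal_moment_odd[of s a 0] by simp

lemma nd_m2: "0 < s \<Longrightarrow> has_bochner_integral lborel (\<lambda>x. normal_density a s x * (x - a)^2) (s^2)"
  using normal_moment_even[of s a 1] by (simp add: power2_eq_square)

lemma nd_x2: assumes s: "0 < s"
  shows "has_bochner_integral lborel (\<lambda>x. normal_density a s x * x^2) (s^2 + a^2)"
proof -
  have "has_bochner_integral lborel (\<lambda>x. normal_density a s x * (x - a)^2 + 2 * a * (normal_density a s x * (x - a)) + a^2 * normal_density a s x) (s^2 + 2 * a * 0 + a^2 * 1)"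
    by (intro has_bochner_integral_add has_bochner_integral_mult_right nd_m0 nd_m1 nd_m2 s)
  moreover have "(\<lambda>x. normal_density a s x * (x - a)^2 + 2 * a * (normal_density a s x * (x - a)) + a^2 * normal_density a s x) = (\<lambda>x. normal_density a s x * x^2)"
    by (rule ext) (simp add: power2_eq_square algebra_simps)
  ultimately show ?thesis by simp
qed

definition rho :: "nat \<Rightarrow> real \<Rightarrow> real \<Rightarrow> real \<Rightarrow> real" where
  "rho K s a x = normal_density a s x / normal_density 0 (sg K) x"

lemma rho_pos: "K > 0 \<Longrightarrow> s > 0 \<Longrightarrow> rho K s a x > 0"
  by (simp add: rho_def normal_density_pos sg_pos)

lemma rho_meas[measurable]: "(\<lambda>x. rho K s a x) \<in> borel_measurable borel"
  unfolding rho_def by measurable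

lemma rho_hbi:
  assumes K: "K > 0" and s: "s > 0" and g[measurable]: "g \<in> borel_measurable borel"
    and h: "has_bochner_integral lborel (\<lambda>x. normal_density a s x * g x) c"
  shows "has_bochner_integral (NK K) (\<lambda>x. rho K s a x * g x) c"
proof -
  have eq: "(\<lambda>x. normal_density 0 (sg K) x * (rho K s a x * g x)) = (\<lambda>x. normal_density a s x * g x)"
  proof -
    have pos: "normal_density 0 (sg K) x \<noteq> 0" for x using normal_density_pos[OF sg_pos[OF K]] by (metis less_irrefl)
    show ?thesis by (auto simp: rho_def pos intro!: ext)
  qed
  have i: "integrable (NK K) (\<lambda>x. rho K s a x * g x)"
    unfolding NK_def by (subst integrable_density) (use h in \<open>auto simp: eq has_bochner_integral_iff\<close>)
  have v: "(\<integral>x. rho K s a x * g x \<partial>NK K) = c"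
    unfolding NK_def by (subst integral_density) (use h in \<open>auto simp: eq has_bochner_integral_iff\<close>)
  show ?thesis using i v by (simp add: has_bochner_integral_iff)
qed

lemma NK_x2: assumes K: "K > 0" shows "has_bochner_integral (NK K) (\<lambda>x. x^2) (1 / real K)"
proof -
  have h: "has_bochner_integral lborel (\<lambda>x. normal_density 0 (sg K) x * x^2) (1 / real K)"
    using nd_x2[OF sg_pos[OF K], of 0] by (simp add: sg_def power_divide)
  have i: "integrable (NK K) (\<lambda>x. x^2)"
    unfolding NK_def by (subst integrable_density) (use h in \<open>auto simp: has_bochner_integral_iff\<close>)
  have v: "(\<integral>x. x^2 \<partial>NK K) = 1 / real K"
    unfolding NK_def by (subst integral_density) (use h in \<open>auto simp: has_bochner_integral_iff\<close>)
  show ?thesis using i v by (simp add: has_bochner_integral_iff)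
qed

section \<open>Weights on the prior\<close>

lemma prod_delta2:
  fixes K :: nat
  assumes "k0 \<in> {1..K}"
  shows "(\<Prod>k\<in>{1..K}. \<Prod>i\<in>(UNIV::'d::finite set). if k = k0 \<and> i = i0 then c else (1::real)) = c"
proof -
  have "(\<Prod>i\<in>(UNIV::'d set). if k = k0 \<and> i = i0 then c else (1::real)) = (if k = k0 then c else 1)" for k
    by (cases "k = k0") auto
  then have "(\<Prod>k\<in>{1..K}. \<Prod>i\<in>(UNIV::'d set). if k = k0 \<and> i = i0 then c else (1::real)) = (\<Prod>k\<in>{1..K}. if k = k0 then c else 1)"
    by (intro prod.cong) auto
  also have "\<dots> = c" by (subst prod.delta) (use assms in auto)
  finally show ?thesis .
qed

lemma prodfun_ins:
  assumes "k0 \<in> {1..K}"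
  shows "prodfun K (\<lambda>k i. if k = k0 \<and> i = i0 then (\<lambda>x. f k i x * h x) else f k i) \<theta> = prodfun K f \<theta> * h (\<theta> k0 $ i0)"
proof -
  have "prodfun K (\<lambda>k i. if k = k0 \<and> i = i0 then (\<lambda>x. f k i x * h x) else f k i) \<theta>
     = (\<Prod>k\<in>{1..K}. \<Prod>i\<in>UNIV. f k i (\<theta> k $ i) * (if k = k0 \<and> i = i0 then h (\<theta> k0 $ i0) else 1))"
    unfolding prodfun_def by (intro prod.cong refl) auto
  also have "\<dots> = prodfun K f \<theta> * (\<Prod>k\<in>{1..K}. \<Prod>i\<in>UNIV. (if k = k0 \<and> i = i0 then h (\<theta> k0 $ i0) else 1))"
    unfolding prodfun_def prod.distrib ..
  also have "\<dots> = prodfun K f \<theta> * h (\<theta> k0 $ i0)"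
    by (simp only: prod_delta2[OF assms])
  finally show ?thesis .
qed

lemma ln_nd:
  assumes s: "s > 0"
  shows "ln (normal_density a s x) = - ln (sqrt (2 * pi) * s) - (x - a)^2 / (2 * s^2)"
proof -
  have sq: "sqrt (2 * pi * s^2) = sqrt (2 * pi) * s" using s by (simp add: real_sqrt_mult)
  have "normal_density a s x = exp (- ((x - a)^2) / (2 * s^2)) / (sqrt (2 * pi) * s)"
    unfolding normal_density_def sq by simp
  then show ?thesis using s by (simp add: ln_div)
qed

lemma ln_rho:
  assumes K: "K > 0" and s: "s > 0"
  shows "ln (rho K s a x) = ln (sg K / s) - (x - a)^2 / (2 * s^2) + real K * x^2 / 2"
proof -
  have sgK: "sg K > 0" by (rule sg_pos[OF K])
  have sg2: "(sg K)^2 = 1 / real K" using K by (simp add: sg_def power_divide)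
  have "ln (rho K s a x) = ln (normal_density a s x) - ln (normal_density 0 (sg K) x)"
    unfolding rho_def using normal_density_pos[OF s, of a x] normal_density_pos[OF sgK, of 0 x] by (simp add: ln_div)
  also have "\<dots> = (ln (sqrt (2 * pi) * sg K) - ln (sqrt (2 * pi) * s)) - (x - a)^2 / (2 * s^2) + x^2 / (2 * (sg K)^2)"
    unfolding ln_nd[OF s] ln_nd[OF sgK] by simp
  also have "ln (sqrt (2 * pi) * sg K) - ln (sqrt (2 * pi) * s) = ln (sg K / s)"
    using s sgK by (simp add: ln_mult ln_div)
  also have "x^2 / (2 * (sg K)^2) = real K * x^2 / 2" unfolding sg2 using K by simp
  finally show ?thesis .
qed

definition wt :: "nat \<Rightarrow> real \<Rightarrow> (nat \<Rightarrow> real^'d) \<Rightarrow> (nat \<Rightarrow> real^'d) \<Rightarrow> real" where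
  "wt K s \<theta> = prodfun K (\<lambda>k i x. rho K s (\<theta> k $ i) x)"

context
  fixes K :: nat and s :: real and \<theta> :: "nat \<Rightarrow> real^'d::finite"
  assumes K: "K > 0" and s: "s > 0"
begin

abbreviation "PI \<equiv> (theta_prior K :: (nat \<Rightarrow> real^'d) measure)"

lemma rho_int0: "has_bochner_integral (NK K) (rho K s a) 1"
  using rho_hbi[OF K s, of "\<lambda>_. 1" a 1] nd_m0[OF s, of a] by simp

lemma W0: "integrable PI (wt K s \<theta>)" "(\<integral>t. wt K s \<theta> t \<partial>PI) = 1"
proof -
  have i: "integrable (NK K) (rho K s a)" for a using rho_int0 by (simp add: has_bochner_integral_iff)
  show "integrable PI (wt K s \<theta>)" unfolding wt_def by (rule theta_prod(1)[OF K]) (rule i)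
  show "(\<integral>t. wt K s \<theta> t \<partial>PI) = 1" unfolding wt_def
    by (subst theta_prod(2)[OF K]) (auto intro: i simp: rho_int0[THEN has_bochner_integral_integral_eq])
qed

lemma W_single:
  assumes k0: "k0 \<in> {1..K}" and h[measurable]: "h \<in> borel_measurable borel"
    and hb: "has_bochner_integral lborel (\<lambda>x. normal_density (\<theta> k0 $ i0) s x * h x) c"
  shows "integrable PI (\<lambda>t. wt K s \<theta> t * h (t k0 $ i0))"
    "(\<integral>t. wt K s \<theta> t * h (t k0 $ i0) \<partial>PI) = c"
proof -
  define F where "F = (\<lambda>k i. if k = k0 \<and> i = i0 then (\<lambda>x. rho K s (\<theta> k $ i) x * h x) else rho K s (\<theta> k $ i))"
  have eq: "(\<lambda>t. wt K s \<theta> t * h (t k0 $ i0)) = prodfun K F"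
    unfolding wt_def F_def by (rule ext) (rule prodfun_ins[OF k0, symmetric])
  have r: "has_bochner_integral (NK K) (\<lambda>x. rho K s (\<theta> k0 $ i0) x * h x) c"
    by (rule rho_hbi[OF K s h hb])
  have i: "integrable (NK K) (F k i)" for k i
    using r rho_int0 unfolding F_def by (auto simp: has_bochner_integral_iff)
  have v: "(\<integral>x. F k i x \<partial>NK K) = (if k = k0 \<and> i = i0 then c else 1)" for k i
    using r rho_int0 unfolding F_def by (auto simp: has_bochner_integral_iff)
  show "integrable PI (\<lambda>t. wt K s \<theta> t * h (t k0 $ i0))" unfolding eq by (rule theta_prod(1)[OF K i])
  show "(\<integral>t. wt K s \<theta> t * h (t k0 $ i0) \<partial>PI) = c" unfolding eq
    by (subst theta_prod(2)[OF K i]) (simp only: v prod_delta2[OF k0])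
qed

lemma W_sq:
  assumes k0: "k0 \<in> {1..K}"
  shows "integrable PI (\<lambda>t. wt K s \<theta> t * (t k0 $ i0 - \<theta> k0 $ i0)^2)"
    "(\<integral>t. wt K s \<theta> t * (t k0 $ i0 - \<theta> k0 $ i0)^2 \<partial>PI) = s^2"
  using W_single[OF k0 _ nd_m2[OF s, of "\<theta> k0 $ i0"]] by simp_all

lemma W_x2:
  assumes k0: "k0 \<in> {1..K}"
  shows "integrable PI (\<lambda>t. wt K s \<theta> t * (t k0 $ i0)^2)"
    "(\<integral>t. wt K s \<theta> t * (t k0 $ i0)^2 \<partial>PI) = s^2 + (\<theta> k0 $ i0)^2"
  using W_single[OF k0 _ nd_x2[OF s, of "\<theta> k0 $ i0"]] by simp_all

lemma W_cross:
  assumes k0: "k0 \<in> {1..K}" and k1: "k1 \<in> {1..K}" and ne: "(k0, i0) \<noteq> (k1, i1)"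
  shows "integrable PI (\<lambda>t. wt K s \<theta> t * (t k0 $ i0 - \<theta> k0 $ i0) * (t k1 $ i1 - \<theta> k1 $ i1))"
    "(\<integral>t. wt K s \<theta> t * (t k0 $ i0 - \<theta> k0 $ i0) * (t k1 $ i1 - \<theta> k1 $ i1) \<partial>PI) = 0"
proof -
  define F0 where "F0 = (\<lambda>k i. if k = k0 \<and> i = i0 then (\<lambda>x. rho K s (\<theta> k $ i) x * (x - \<theta> k0 $ i0)) else rho K s (\<theta> k $ i))"
  define F where "F = (\<lambda>k i. if k = k1 \<and> i = i1 then (\<lambda>x. F0 k i x * (x - \<theta> k1 $ i1)) else F0 k i)"
  have eq: "(\<lambda>t. wt K s \<theta> t * (t k0 $ i0 - \<theta> k0 $ i0) * (t k1 $ i1 - \<theta> k1 $ i1)) = prodfun K F"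
    unfolding wt_def F_def F0_def
    by (rule ext) (simp only: prodfun_ins[OF k1] prodfun_ins[OF k0])
  have r1: "has_bochner_integral (NK K) (\<lambda>x. rho K s (\<theta> k0 $ i0) x * (x - \<theta> k0 $ i0)) 0"
    by (rule rho_hbi[OF K s _ nd_m1[OF s]]) simp
  have r1': "has_bochner_integral (NK K) (\<lambda>x. rho K s (\<theta> k1 $ i1) x * (x - \<theta> k1 $ i1)) 0"
    by (rule rho_hbi[OF K s _ nd_m1[OF s]]) simp
  have i: "integrable (NK K) (F k i)" for k i
    using r1 r1' rho_int0 ne unfolding F_def F0_def by (auto simp: has_bochner_integral_iff)
  have v: "(\<integral>x. F k0 i0 x \<partial>NK K) = 0"
    using r1 ne unfolding F_def F0_def by (auto simp: has_bochner_integral_iff)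
  show "integrable PI (\<lambda>t. wt K s \<theta> t * (t k0 $ i0 - \<theta> k0 $ i0) * (t k1 $ i1 - \<theta> k1 $ i1))"
    unfolding eq by (rule theta_prod(1)[OF K i])
  show "(\<integral>t. wt K s \<theta> t * (t k0 $ i0 - \<theta> k0 $ i0) * (t k1 $ i1 - \<theta> k1 $ i1) \<partial>PI) = 0"
    unfolding eq
    apply (subst theta_prod(2)[OF K i])
    apply (rule prod_zero, simp)
    apply (rule bexI[OF _ k0])
    apply (rule prod_zero, simp)
    using v by auto
qed

lemma W_pair:
  assumes j: "j \<in> {1..K} \<times> UNIV" and j': "j' \<in> {1..K} \<times> UNIV"
  shows "integrable PI (\<lambda>t. wt K s \<theta> t * (t (fst j) $ snd j - \<theta> (fst j) $ snd j) * (t (fst j') $ snd j' - \<theta> (fst j') $ snd j'))"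
    "(\<integral>t. wt K s \<theta> t * (t (fst j) $ snd j - \<theta> (fst j) $ snd j) * (t (fst j') $ snd j' - \<theta> (fst j') $ snd j') \<partial>PI) = (if j = j' then s^2 else 0)"
proof -
  obtain k0 i0 where j0: "j = (k0, i0)" "k0 \<in> {1..K}" using j by auto
  obtain k1 i1 where j1: "j' = (k1, i1)" "k1 \<in> {1..K}" using j' by auto
  have "integrable PI (\<lambda>t. wt K s \<theta> t * (t (fst j) $ snd j - \<theta> (fst j) $ snd j) * (t (fst j') $ snd j' - \<theta> (fst j') $ snd j'))
    \<and> (\<integral>t. wt K s \<theta> t * (t (fst j) $ snd j - \<theta> (fst j) $ snd j) * (t (fst j') $ snd j' - \<theta> (fst j') $ snd j') \<partial>PI) = (if j = j' then s^2 else 0)"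
  proof (cases "j = j'")
    case True
    have e: "(\<lambda>t. wt K s \<theta> t * (t k0 $ i0 - \<theta> k0 $ i0) * (t k0 $ i0 - \<theta> k0 $ i0)) = (\<lambda>t. wt K s \<theta> t * (t k0 $ i0 - \<theta> k0 $ i0)^2)"
      by (simp add: power2_eq_square mult.assoc)
    have hj': "j' = (k0, i0)" using True j0 by simp
    show ?thesis using W_sq[OF j0(2), of i0] unfolding j0(1) hj' by (simp add: e)
  next
    case False
    show ?thesis using False j0 j1 W_cross[OF j0(2) j1(2), of i0 i1] by auto
  qed
  then show "integrable PI (\<lambda>t. wt K s \<theta> t * (t (fst j) $ snd j - \<theta> (fst j) $ snd j) * (t (fst j') $ snd j' - \<theta> (fst j') $ snd j'))"
    "(\<integral>t. wt K s \<theta> t * (t (fst j) $ snd j - \<theta> (fst j) $ snd j) * (t (fst j') $ snd j' - \<theta> (fst j') $ snd j') \<partial>PI) = (if j = j' then s^2 else 0)"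
    by auto
qed

lemma lin_expand:
  fixes v :: "nat \<Rightarrow> real^'d" and t :: "nat \<Rightarrow> real^'d"
  shows "(\<Sum>k\<in>{1..K}. (t k - \<theta> k) \<bullet> v k) = (\<Sum>j\<in>{1..K} \<times> UNIV. v (fst j) $ snd j * (t (fst j) $ snd j - \<theta> (fst j) $ snd j))"
  unfolding inner_vec_def sum.cartesian_product
  by (simp add: inner_real_def case_prod_beta algebra_simps)

lemma W_lin2:
  fixes v :: "nat \<Rightarrow> real^'d"
  shows "integrable PI (\<lambda>t. wt K s \<theta> t * (\<Sum>k\<in>{1..K}. (t k - \<theta> k) \<bullet> v k)^2)"
    "(\<integral>t. wt K s \<theta> t * (\<Sum>k\<in>{1..K}. (t k - \<theta> k) \<bullet> v k)^2 \<partial>PI) = s^2 * (\<Sum>k\<in>{1..K}. (norm (v k))^2)"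
proof -
  define J where "J = {1..K} \<times> (UNIV :: 'd set)"
  have fJ: "finite J" unfolding J_def by simp
  define c where "c j = v (fst j) $ snd j" for j
  define D where "D j t = t (fst j) $ snd j - \<theta> (fst j) $ snd j" for j and t :: "nat \<Rightarrow> real^'d"
  have eq: "(\<lambda>t. wt K s \<theta> t * (\<Sum>k\<in>{1..K}. (t k - \<theta> k) \<bullet> v k)^2)
     = (\<lambda>t. \<Sum>j\<in>J. \<Sum>j'\<in>J. c j * c j' * (wt K s \<theta> t * D j t * D j' t))"
  proof
    fix t
    have "(\<Sum>k\<in>{1..K}. (t k - \<theta> k) \<bullet> v k)^2 = (\<Sum>j\<in>J. c j * D j t) * (\<Sum>j'\<in>J. c j' * D j' t)"
      unfolding lin_expand J_def c_def D_def power2_eq_square ..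
    also have "\<dots> = (\<Sum>j\<in>J. \<Sum>j'\<in>J. (c j * D j t) * (c j' * D j' t))"
      by (rule sum_product)
    finally show "wt K s \<theta> t * (\<Sum>k\<in>{1..K}. (t k - \<theta> k) \<bullet> v k)^2 = (\<Sum>j\<in>J. \<Sum>j'\<in>J. c j * c j' * (wt K s \<theta> t * D j t * D j' t))"
      by (simp add: sum_distrib_left algebra_simps)
  qed
  have ip: "j \<in> J \<Longrightarrow> j' \<in> J \<Longrightarrow> integrable PI (\<lambda>t. wt K s \<theta> t * D j t * D j' t)" for j j'
    unfolding J_def D_def by (rule W_pair(1))
  have vp: "j \<in> J \<Longrightarrow> j' \<in> J \<Longrightarrow> (\<integral>t. wt K s \<theta> t * D j t * D j' t \<partial>PI) = (if j = j' then s^2 else 0)" for j j'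
    unfolding J_def D_def by (rule W_pair(2))
  show "integrable PI (\<lambda>t. wt K s \<theta> t * (\<Sum>k\<in>{1..K}. (t k - \<theta> k) \<bullet> v k)^2)"
    unfolding eq
    apply (rule Bochner_Integration.integrable_sum)
    apply (rule Bochner_Integration.integrable_sum)
    apply (rule integrable_mult_right)
    apply (rule ip) by auto
  have "(\<integral>t. wt K s \<theta> t * (\<Sum>k\<in>{1..K}. (t k - \<theta> k) \<bullet> v k)^2 \<partial>PI)
      = (\<Sum>j\<in>J. \<Sum>j'\<in>J. c j * c j' * (if j = j' then s^2 else 0))"
    unfolding eq
    by (simp add: ip vp cong: sum.cong)
  also have "\<dots> = (\<Sum>j\<in>J. c j * c j * s^2)"
    by (intro sum.cong refl) (simp add: if_distrib sum.delta'[OF fJ] cong: if_cong)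
  also have "\<dots> = s^2 * (\<Sum>k\<in>{1..K}. (norm (v k))^2)"
  proof -
    have "(\<Sum>j\<in>J. c j * c j * s^2) = (\<Sum>k\<in>{1..K}. \<Sum>i\<in>UNIV. v k $ i * v k $ i * s^2)"
      unfolding J_def c_def sum.cartesian_product by (simp add: case_prod_beta)
    also have "\<dots> = s^2 * (\<Sum>k\<in>{1..K}. (norm (v k))^2)"
      by (simp add: power2_norm_eq_inner inner_vec_def sum_distrib_left sum_distrib_right inner_real_def algebra_simps)
    finally show ?thesis .
  qed
  finally show "(\<integral>t. wt K s \<theta> t * (\<Sum>k\<in>{1..K}. (t k - \<theta> k) \<bullet> v k)^2 \<partial>PI) = s^2 * (\<Sum>k\<in>{1..K}. (norm (v k))^2)" .
qed

lemma wt_pos: "wt K s \<theta> t > 0"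
  unfolding wt_def prodfun_def by (intro prod_pos) (auto intro: rho_pos[OF K s])

lemma W_lnw:
  shows "integrable PI (\<lambda>t. wt K s \<theta> t * ln (wt K s \<theta> t))"
    "(\<integral>t. wt K s \<theta> t * ln (wt K s \<theta> t) \<partial>PI)
       = (\<Sum>j\<in>{1..K} \<times> (UNIV::'d set). ln (sg K / s) - 1/2 + real K * s^2 / 2 + real K * (\<theta> (fst j) $ snd j)^2 / 2)"
proof -
  define J where "J = {1..K} \<times> (UNIV :: 'd set)"
  define T where "T j t = ln (sg K / s) * wt K s \<theta> t - (1 / (2 * s^2)) * (wt K s \<theta> t * (t (fst j) $ snd j - \<theta> (fst j) $ snd j)^2)
     + (real K / 2) * (wt K s \<theta> t * (t (fst j) $ snd j)^2)" for j t
  have eq: "(\<lambda>t. wt K s \<theta> t * ln (wt K s \<theta> t)) = (\<lambda>t. \<Sum>j\<in>J. T j t)"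
  proof
    fix t :: "nat \<Rightarrow> real^'d"
    have "ln (wt K s \<theta> t) = (\<Sum>k\<in>{1..K}. \<Sum>i\<in>UNIV. ln (rho K s (\<theta> k $ i) (t k $ i)))"
    proof -
      have nz: "rho K s a x \<noteq> 0" for a x using rho_pos[OF K s, of a x] by simp
      have nz2: "(\<Prod>i\<in>UNIV. rho K s (\<theta> k $ i) (t k $ i)) \<noteq> 0" for k
        using nz by (simp add: prod_zero_iff)
      show ?thesis unfolding wt_def prodfun_def
        by (subst ln_prod) (auto simp: nz2 nz ln_prod intro!: sum.cong)
    qed
    also have "\<dots> = (\<Sum>j\<in>J. ln (rho K s (\<theta> (fst j) $ snd j) (t (fst j) $ snd j)))"
      unfolding J_def sum.cartesian_product by (simp add: case_prod_beta)
    finally show "wt K s \<theta> t * ln (wt K s \<theta> t) = (\<Sum>j\<in>J. T j t)"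
      unfolding T_def by (simp add: sum_distrib_left ln_rho[OF K s] algebra_simps)
  qed
  have iT: "j \<in> J \<Longrightarrow> integrable PI (T j)" for j
    unfolding T_def J_def using W0(1) W_sq(1) W_x2(1) by auto
  have vT: "j \<in> J \<Longrightarrow> (\<integral>t. T j t \<partial>PI) = ln (sg K / s) - 1/2 + real K * s^2 / 2 + real K * (\<theta> (fst j) $ snd j)^2 / 2" for j
  proof -
    assume "j \<in> J"
    then obtain k0 i0 where j: "j = (k0, i0)" and k0: "k0 \<in> {1..K}" unfolding J_def by auto
    have "(\<integral>t. T j t \<partial>PI) = ln (sg K / s) * 1 - (1 / (2 * s^2)) * s^2 + (real K / 2) * (s^2 + (\<theta> k0 $ i0)^2)"
      unfolding T_def j using W0 W_sq[OF k0, of i0] W_x2[OF k0, of i0]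
      by (simp add: integral_add integral_diff)
    also have "\<dots> = ln (sg K / s) - 1/2 + real K * s^2 / 2 + real K * (\<theta> (fst j) $ snd j)^2 / 2"
      using s by (simp add: j field_simps)
    finally show ?thesis .
  qed
  show "integrable PI (\<lambda>t. wt K s \<theta> t * ln (wt K s \<theta> t))"
    unfolding eq by (rule Bochner_Integration.integrable_sum) (rule iT)
  show "(\<integral>t. wt K s \<theta> t * ln (wt K s \<theta> t) \<partial>PI)
       = (\<Sum>j\<in>{1..K} \<times> (UNIV::'d set). ln (sg K / s) - 1/2 + real K * s^2 / 2 + real K * (\<theta> (fst j) $ snd j)^2 / 2)"
    unfolding eq by (subst Bochner_Integration.integral_sum) (auto intro: iT simp: vT J_def)
qed

end

lemma prior_sq:
  assumes K: "K > 0" and k0: "k0 \<in> {1..K}"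
  shows "integrable (theta_prior K :: (nat \<Rightarrow> real^'d::finite) measure) (\<lambda>t. (t k0 $ i0)^2)"
    "(\<integral>t. (t k0 $ i0)^2 \<partial>(theta_prior K :: (nat \<Rightarrow> real^'d::finite) measure)) = 1 / real K"
proof -
  interpret N: prob_space "NK K" by (rule prob_space_NK[OF K])
  define F where "F = (\<lambda>k i. if k = k0 \<and> i = i0 then (\<lambda>x. (\<lambda>_. 1::real) x * x^2) else (\<lambda>_. 1::real))"
  have eq: "(\<lambda>t::nat \<Rightarrow> real^'d. (t k0 $ i0)^2) = prodfun K F"
    unfolding F_def by (rule ext) (subst prodfun_ins[OF k0], simp add: prodfun_def)
  have r: "has_bochner_integral (NK K) (\<lambda>x. x^2) (1 / real K)" by (rule NK_x2[OF K])
  have i: "integrable (NK K) (F k i)" for k i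
    using r unfolding F_def by (auto simp: has_bochner_integral_iff)
  have v: "(\<integral>x. F k i x \<partial>NK K) = (if k = k0 \<and> i = i0 then 1 / real K else 1)" for k i
    using r unfolding F_def by (auto simp: has_bochner_integral_iff N.prob_space)
  show "integrable (theta_prior K :: (nat \<Rightarrow> real^'d::finite) measure) (\<lambda>t. (t k0 $ i0)^2)"
    unfolding eq by (rule theta_prod(1)[OF K i])
  show "(\<integral>t. (t k0 $ i0)^2 \<partial>(theta_prior K :: (nat \<Rightarrow> real^'d::finite) measure)) = 1 / real K"
    unfolding eq by (subst theta_prod(2)[OF K i]) (simp only: v prod_delta2[OF k0])
qed


section \<open>Histories\<close>

lemma finite_hist: "finite {h::bool list. length h = n}"
  using finite_lists_length_eq[of "UNIV::bool set" n] by simp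

lemma hist_split:
  fixes F :: "bool list \<Rightarrow> real"
  shows "(\<Sum>h\<in>{h. length h = Suc n}. F h) = (\<Sum>h\<in>{h::bool list. length h = n}. F (h @ [True]) + F (h @ [False]))"
proof -
  have im: "{h::bool list. length h = Suc n} = (\<lambda>(h, b). h @ [b]) ` ({h. length h = n} \<times> UNIV)"
  proof (rule set_eqI, rule iffI)
    fix x :: "bool list" assume "x \<in> {h. length h = Suc n}"
    then have "x = butlast x @ [last x]" "length (butlast x) = n"
      by (auto intro: append_butlast_last_id[symmetric])
    then show "x \<in> (\<lambda>(h, b). h @ [b]) ` ({h. length h = n} \<times> UNIV)"
      by (metis (mono_tags, lifting) UNIV_I case_prod_conv image_eqI mem_Collect_eq mem_Sigma_iff)
  qed auto
  have inj: "inj_on (\<lambda>(h::bool list, b::bool). h @ [b]) ({h. length h = n} \<times> UNIV)"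
    by (auto simp: inj_on_def)
  have "(\<Sum>h\<in>{h. length h = Suc n}. F h) = (\<Sum>x\<in>{h::bool list. length h = n} \<times> UNIV. F (fst x @ [snd x]))"
    unfolding im by (subst sum.reindex[OF inj]) (simp add: case_prod_beta)
  also have "\<dots> = (\<Sum>h\<in>{h::bool list. length h = n}. \<Sum>b\<in>UNIV. F (h @ [b]))"
    by (simp add: sum.cartesian_product case_prod_beta)
  also have "\<dots> = (\<Sum>h\<in>{h::bool list. length h = n}. F (h @ [True]) + F (h @ [False]))"
    by (simp add: UNIV_bool add.commute)
  finally show ?thesis .
qed


lemma tele_step:
  assumes P: "P > 0" and Q: "Q > 0" and p: "0 < p" "p < 1" and q: "0 < q" "q < 1"
  shows "(P * p) * ln ((P * p) / (Q * q)) + (P * (1 - p)) * ln ((P * (1 - p)) / (Q * (1 - q)))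
       = P * ln (P / Q) + P * kl_bern p q"
proof -
  have a: "ln ((P * p) / (Q * q)) = ln (P / Q) + ln (p / q)"
    using P Q p q by (simp add: ln_div ln_mult)
  have b: "ln ((P * (1 - p)) / (Q * (1 - q))) = ln (P / Q) + ln ((1 - p) / (1 - q))"
    using P Q p q by (simp add: ln_div ln_mult)
  show ?thesis unfolding a b kl_bern_def by (simp add: algebra_simps)
qed

lemma tele:
  fixes P Q p q :: "bool list \<Rightarrow> real"
  assumes pos: "\<And>h. length h = n \<Longrightarrow> P h > 0 \<and> Q h > 0 \<and> 0 < p h \<and> p h < 1 \<and> 0 < q h \<and> q h < 1"
    and PT: "\<And>h. length h = n \<Longrightarrow> P (h @ [True]) = P h * p h"
    and PF: "\<And>h. length h = n \<Longrightarrow> P (h @ [False]) = P h * (1 - p h)"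
    and QT: "\<And>h. length h = n \<Longrightarrow> Q (h @ [True]) = Q h * q h"
    and QF: "\<And>h. length h = n \<Longrightarrow> Q (h @ [False]) = Q h * (1 - q h)"
  shows "(\<Sum>h\<in>{h. length h = Suc n}. P h * ln (P h / Q h))
       = (\<Sum>h\<in>{h. length h = n}. P h * ln (P h / Q h)) + (\<Sum>h\<in>{h. length h = n}. P h * kl_bern (p h) (q h))"
  unfolding hist_split sum.distrib[symmetric]
proof (rule sum.cong, simp)
  fix h :: "bool list" assume "h \<in> {h. length h = n}"
  then have h: "length h = n" by simp
  show "P (h @ [True]) * ln (P (h @ [True]) / Q (h @ [True])) + P (h @ [False]) * ln (P (h @ [False]) / Q (h @ [False]))
     = P h * ln (P h / Q h) + P h * kl_bern (p h) (q h)"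
    unfolding PT[OF h] PF[OF h] QT[OF h] QF[OF h] using pos[OF h] by (intro tele_step) auto
qed

lemma sigmoid_pos: "0 < sigmoid z" and sigmoid_lt1: "sigmoid z < 1"
proof -
  have e: "exp (- z) > 0" by simp
  then have d: "1 + exp (- z) > 1" by simp
  have p: "1 + exp (- z) > 0" using e by linarith
  then show "0 < sigmoid z" unfolding sigmoid_def by simp
  show "sigmoid z < 1" unfolding sigmoid_def using d p by (simp add: divide_less_eq)
qed

lemma ar_prob_bounds: "0 < ar_prob \<Phi>0 \<Phi>1 K \<theta> h t" "ar_prob \<Phi>0 \<Phi>1 K \<theta> h t < 1"
  unfolding ar_prob_def by (rule sigmoid_pos, rule sigmoid_lt1)

lemma ar_prob_le: "0 \<le> ar_prob \<Phi>0 \<Phi>1 K \<theta> h t" "ar_prob \<Phi>0 \<Phi>1 K \<theta> h t \<le> 1"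
  using ar_prob_bounds[of \<Phi>0 \<Phi>1 K \<theta> h t] by auto

lemma next_prob_bounds: "0 < next_prob \<Phi>0 \<Phi>1 K \<theta> h" "next_prob \<Phi>0 \<Phi>1 K \<theta> h < 1"
  unfolding next_prob_def Let_def using ar_prob_bounds by auto

lemma hist_lik_pos: "0 < hist_lik \<Phi>0 \<Phi>1 K \<theta> h"
  unfolding hist_lik_def using ar_prob_bounds
  by (intro mult_pos_pos prod_pos) (auto simp: algebra_simps)

lemma hist_lik_le1: "hist_lik \<Phi>0 \<Phi>1 K \<theta> h \<le> 1"
  unfolding hist_lik_def
proof (rule mult_le_one)
  show "(1 / 2 :: real) ^ min K (length h) \<le> 1" by (simp add: power_le_one)
  show "0 \<le> (\<Prod>s\<in>{K - 1..<length h - 1}. if h ! (s + 1) then ar_prob \<Phi>0 \<Phi>1 K \<theta> (take (s + 1) h) s else 1 - ar_prob \<Phi>0 \<Phi>1 K \<theta> (take (s + 1) h) s)"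
    by (intro prod_nonneg) (auto simp: ar_prob_le)
  show "(\<Prod>s\<in>{K - 1..<length h - 1}. if h ! (s + 1) then ar_prob \<Phi>0 \<Phi>1 K \<theta> (take (s + 1) h) s else 1 - ar_prob \<Phi>0 \<Phi>1 K \<theta> (take (s + 1) h) s) \<le> 1"
    by (intro prod_le_1) (auto simp: ar_prob_le)
qed

lemma hist_lik_snoc:
  assumes K: "K > 0" and h: "length h \<ge> 1"
  shows "hist_lik \<Phi>0 \<Phi>1 K \<theta> (h @ [b]) = hist_lik \<Phi>0 \<Phi>1 K \<theta> h *
           (if b then next_prob \<Phi>0 \<Phi>1 K \<theta> h else 1 - next_prob \<Phi>0 \<Phi>1 K \<theta> h)"
proof (cases "length h < K")
  case True
  have e1: "{K - 1..<length (h @ [b]) - 1} = {}" "{K - 1..<length h - 1} = {}" using True by auto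
  have np: "next_prob \<Phi>0 \<Phi>1 K \<theta> h = 1/2" using True h unfolding next_prob_def Let_def by auto
  have m: "min K (length (h @ [b])) = Suc (length h)" "min K (length h) = length h" using True by auto
  show ?thesis unfolding hist_lik_def e1 np m by simp
next
  case False
  define n where "n = length h"
  have nK: "K \<le> n" using False n_def by simp
  have ins: "{K - 1..<length (h @ [b]) - 1} = insert (n - 1) {K - 1..<n - 1}" using nK K h n_def by auto
  define f where "f = (\<lambda>g s. if g ! (s + 1) then ar_prob \<Phi>0 \<Phi>1 K \<theta> (take (s + 1) g) s else 1 - ar_prob \<Phi>0 \<Phi>1 K \<theta> (take (s + 1) g) s)"
  have hl: "hist_lik \<Phi>0 \<Phi>1 K \<theta> g = (1/2)^(min K (length g)) * prod (f g) {K - 1..<length g - 1}" for g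
    unfolding hist_lik_def f_def by simp
  have same: "f (h @ [b]) s = f h s" if "s \<in> {K - 1..<n - 1}" for s
    using that n_def unfolding f_def by (auto simp: nth_append)
  have last: "f (h @ [b]) (n - 1) = (if b then next_prob \<Phi>0 \<Phi>1 K \<theta> h else 1 - next_prob \<Phi>0 \<Phi>1 K \<theta> h)"
    using nK K h n_def unfolding f_def next_prob_def Let_def by (auto simp: nth_append)
  have "hist_lik \<Phi>0 \<Phi>1 K \<theta> (h @ [b]) = (1/2)^K * (f (h @ [b]) (n - 1) * (\<Prod>s\<in>{K - 1..<n - 1}. f (h @ [b]) s))"
    unfolding hl ins using nK n_def by (subst prod.insert) auto
  also have "\<dots> = (1/2)^K * (f (h @ [b]) (n - 1) * (\<Prod>s\<in>{K - 1..<n - 1}. f h s))"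
    using same by (metis (no_types, lifting) prod.cong)
  also have "hist_lik \<Phi>0 \<Phi>1 K \<theta> h = (1/2)^K * (\<Prod>s\<in>{K - 1..<n - 1}. f h s)"
    unfolding hl using nK n_def by (simp add: min_def)
  ultimately show ?thesis unfolding last by simp
qed

lemma hist_lik_len1: "K > 0 \<Longrightarrow> length h = 1 \<Longrightarrow> hist_lik \<Phi>0 \<Phi>1 K \<theta> h = 1/2"
proof -
  assume "K > 0" "length h = 1"
  then have "min K (length h) = 1" by simp
  then show ?thesis unfolding hist_lik_def using \<open>length h = 1\<close> by simp
qed


section \<open>KL of sigmoids\<close>

lemma sigmoid_deriv: "DERIV sigmoid x :> sigmoid x * (1 - sigmoid x)"
proof -
  have e: "exp (- x) > 0" by simp
  have p: "1 + exp (- x) \<noteq> 0" using e by linarith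
  have "DERIV (\<lambda>x. 1 / (1 + exp (- x))) x :> - (- exp (- x)) / (1 + exp (- x))^2"
    using p by (auto intro!: derivative_eq_intros simp: power2_eq_square)
  moreover have "- (- exp (- x)) / (1 + exp (- x))^2 = sigmoid x * (1 - sigmoid x)"
    unfolding sigmoid_def using p by (simp add: field_simps power2_eq_square)
  ultimately show ?thesis unfolding sigmoid_def[abs_def] by simp
qed

lemma sigmoid_lip:
  assumes "z \<le> w"
  shows "0 \<le> sigmoid w - sigmoid z" "sigmoid w - sigmoid z \<le> (w - z) / 4"
proof -
  have b: "0 \<le> sigmoid x * (1 - sigmoid x) \<and> sigmoid x * (1 - sigmoid x) \<le> 1/4" for x
  proof -
    have "0 < sigmoid x" "sigmoid x < 1" by (rule sigmoid_pos, rule sigmoid_lt1)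
    then have a: "0 \<le> sigmoid x * (1 - sigmoid x)" by (intro mult_nonneg_nonneg) auto
    have "sigmoid x * (1 - sigmoid x) = 1/4 - (sigmoid x - 1/2)^2" by (simp add: power2_eq_square algebra_simps)
    moreover have "(sigmoid x - 1/2)^2 \<ge> 0" by simp
    ultimately show ?thesis using a by linarith
  qed
  have "0 \<le> sigmoid w - sigmoid z \<and> sigmoid w - sigmoid z \<le> (w - z) / 4"
  proof (cases "z = w")
    case False
    then have lt: "z < w" using assms by simp
    obtain c where c: "sigmoid w - sigmoid z = (w - z) * (sigmoid c * (1 - sigmoid c))"
      using MVT2[OF lt, of sigmoid "\<lambda>x. sigmoid x * (1 - sigmoid x)"] sigmoid_deriv by blast
    have "0 \<le> (w - z) * (sigmoid c * (1 - sigmoid c))" using lt b[of c] by simp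
    moreover have "(w - z) * (sigmoid c * (1 - sigmoid c)) \<le> (w - z) * (1/4)"
      using lt b[of c] by (intro mult_left_mono) auto
    ultimately show ?thesis unfolding c by simp
  qed simp
  then show "0 \<le> sigmoid w - sigmoid z" "sigmoid w - sigmoid z \<le> (w - z) / 4" by auto
qed

definition Floss :: "real \<Rightarrow> real \<Rightarrow> real" where
  "Floss p w = p * ln (1 + exp (- w)) + (1 - p) * ln (1 + exp w)"

lemma Floss_deriv: "DERIV (Floss p) w :> sigmoid w - p"
proof -
  have e1: "1 + exp (- w) > 0" "1 + exp w > 0" using exp_gt_zero[of "-w"] exp_gt_zero[of w] by linarith+
  have "DERIV (Floss p) w :> p * (- exp (- w) / (1 + exp (- w))) + (1 - p) * (exp w / (1 + exp w))"
    unfolding Floss_def[abs_def]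
    using e1 by (auto intro!: derivative_eq_intros simp: add_pos_pos mult_ac)
  moreover have "p * (- exp (- w) / (1 + exp (- w))) + (1 - p) * (exp w / (1 + exp w)) = sigmoid w - p"
  proof -
    have a: "exp (- w) / (1 + exp (- w)) = 1 - sigmoid w"
      unfolding sigmoid_def using e1 by (simp add: field_simps)
    have b: "exp w / (1 + exp w) = sigmoid w"
      unfolding sigmoid_def using e1 by (simp add: field_simps exp_minus)
    have "p * (- exp (- w) / (1 + exp (- w))) + (1 - p) * (exp w / (1 + exp w)) = - p * (exp (- w) / (1 + exp (- w))) + (1 - p) * (exp w / (1 + exp w))"
      by simp
    also have "\<dots> = sigmoid w - p" unfolding a b by (simp add: algebra_simps)
    finally show ?thesis .
  qed
  ultimately show ?thesis by simp
qed

lemma kl_sigmoid_Floss: "kl_bern (sigmoid z) (sigmoid w) = Floss (sigmoid z) w - Floss (sigmoid z) z"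
proof -
  have ls: "ln (sigmoid w) = - ln (1 + exp (- w))" for w
  proof -
    have "1 + exp (- w) > 0" using exp_gt_zero[of "-w"] by linarith
    then show ?thesis unfolding sigmoid_def by (simp add: ln_div)
  qed
  have ls1: "ln (1 - sigmoid w) = - ln (1 + exp w)" for w
  proof -
    have e: "1 + exp (- w) > 0" "1 + exp w > 0" using exp_gt_zero[of "-w"] exp_gt_zero[of w] by linarith+
    have "1 - sigmoid w = 1 / (1 + exp w)" unfolding sigmoid_def using e
      by (simp add: field_simps exp_minus)
    then show ?thesis using e by (simp add: ln_div)
  qed
  define p where "p = sigmoid z"
  have p: "0 < p" "p < 1" unfolding p_def by (rule sigmoid_pos, rule sigmoid_lt1)
  have "kl_bern p (sigmoid w) = p * ln p + (1 - p) * ln (1 - p) + Floss p w"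
    unfolding kl_bern_def Floss_def using p sigmoid_pos[of w] sigmoid_lt1[of w]
    by (simp add: ln_div ls ls1 algebra_simps)
  moreover have "0 = p * ln p + (1 - p) * ln (1 - p) + Floss p z"
    unfolding Floss_def p_def using sigmoid_pos[of z] sigmoid_lt1[of z] ls[of z] ls1[of z]
    by (simp add: algebra_simps)
  ultimately show ?thesis unfolding p_def by linarith
qed

lemma kl_sigmoid_quad: "kl_bern (sigmoid z) (sigmoid w) \<le> (w - z)^2 / 8"
proof -
  define p where "p = sigmoid z"
  define g where "g x = (x - z)^2 / 8 - (Floss p x - Floss p z)" for x
  have gd: "DERIV g x :> (x - z) / 4 - (sigmoid x - p)" for x
    unfolding g_def[abs_def]
    by (auto intro!: derivative_eq_intros Floss_deriv)
  have "g w \<ge> 0"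
  proof (cases w z rule: linorder_cases)
    case less
    obtain c where c: "w < c" "c < z" "g z - g w = (z - w) * ((c - z) / 4 - (sigmoid c - p))"
      using MVT2[OF less, of g "\<lambda>x. (x - z) / 4 - (sigmoid x - p)"] gd by blast
    have "sigmoid z - sigmoid c \<le> (z - c) / 4" using sigmoid_lip[of c z] c by simp
    then have "(c - z) / 4 - (sigmoid c - p) \<le> 0" unfolding p_def by simp
    then have "g z - g w \<le> 0" using c less by (simp add: mult_nonneg_nonpos)
    moreover have "g z = 0" unfolding g_def by simp
    ultimately show ?thesis by simp
  next
    case equal then show ?thesis unfolding g_def by simp
  next
    case greater
    obtain c where c: "z < c" "c < w" "g w - g z = (w - z) * ((c - z) / 4 - (sigmoid c - p))"
      using MVT2[OF greater, of g "\<lambda>x. (x - z) / 4 - (sigmoid x - p)"] gd by blast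
    have "sigmoid c - sigmoid z \<le> (c - z) / 4" using sigmoid_lip[of z c] c by simp
    then have "(c - z) / 4 - (sigmoid c - p) \<ge> 0" unfolding p_def by simp
    then have "g w - g z \<ge> 0" using c greater by simp
    moreover have "g z = 0" unfolding g_def by simp
    ultimately show ?thesis by simp
  qed
  then show ?thesis using kl_sigmoid_Floss[of z w] unfolding g_def p_def by simp
qed


lemma sets_gauss_prior: "sets (gauss_prior K :: (real^'d::finite) measure) = sets borel"
  unfolding gauss_prior_def by simp

lemma meas_comp_theta:
  assumes k: "k \<in> {1..K}"
  shows "(\<lambda>\<theta>. \<theta> k) \<in> measurable (theta_prior K :: (nat \<Rightarrow> real^'d::finite) measure) borel"
proof -
  have "(\<lambda>\<theta>. \<theta> k) \<in> measurable (theta_prior K :: (nat \<Rightarrow> real^'d::finite) measure) (gauss_prior K)"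
    unfolding theta_prior_def using k by (rule measurable_component_singleton)
  then show ?thesis using measurable_cong_sets[OF refl sets_gauss_prior] by blast
qed

lemma meas_lin:
  "(\<lambda>\<theta>. \<Sum>k\<in>{1..K}. \<theta> k \<bullet> v k) \<in> borel_measurable (theta_prior K :: (nat \<Rightarrow> real^'d::finite) measure)"
proof (rule borel_measurable_sum)
  fix k assume k: "k \<in> {1..K}"
  have "(\<lambda>x::real^'d. x \<bullet> v k) \<in> borel_measurable borel" by (intro borel_measurable_continuous_onI continuous_intros)
  from measurable_compose[OF meas_comp_theta[OF k] this]
  show "(\<lambda>\<theta>. \<theta> k \<bullet> v k) \<in> borel_measurable (theta_prior K :: (nat \<Rightarrow> real^'d::finite) measure)" by simp
qed

lemma sigmoid_meas[measurable]: "sigmoid \<in> borel_measurable borel"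
  unfolding sigmoid_def[abs_def] by measurable

lemma ar_prob_meas:
  "(\<lambda>\<theta>. ar_prob \<Phi>0 \<Phi>1 K \<theta> h t) \<in> borel_measurable (theta_prior K :: (nat \<Rightarrow> real^'d::finite) measure)"
  unfolding ar_prob_def by (rule measurable_compose[OF meas_lin sigmoid_meas])

lemma next_prob_meas:
  "(\<lambda>\<theta>. next_prob \<Phi>0 \<Phi>1 K \<theta> h) \<in> borel_measurable (theta_prior K :: (nat \<Rightarrow> real^'d::finite) measure)"
  unfolding next_prob_def Let_def using ar_prob_meas by (cases "K - 1 \<le> length h - 1") auto

lemma hist_lik_meas:
  "(\<lambda>\<theta>. hist_lik \<Phi>0 \<Phi>1 K \<theta> h) \<in> borel_measurable (theta_prior K :: (nat \<Rightarrow> real^'d::finite) measure)"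
  unfolding hist_lik_def
  apply (intro borel_measurable_times borel_measurable_const borel_measurable_prod)
  subgoal for s by (cases "h ! (s + 1)") (auto intro!: ar_prob_meas borel_measurable_diff)
  done

definition zf :: "real^'d \<Rightarrow> real^'d \<Rightarrow> nat \<Rightarrow> (nat \<Rightarrow> real^'d) \<Rightarrow> bool list \<Rightarrow> real" where
  "zf \<Phi>0 \<Phi>1 K \<theta> h = (\<Sum>k\<in>{1..K}. \<theta> k \<bullet> feat \<Phi>0 \<Phi>1 (h ! (length h - k)))"

lemma next_prob_zf:
  assumes "K \<le> length h" "K > 0"
  shows "next_prob \<Phi>0 \<Phi>1 K \<theta> h = sigmoid (zf \<Phi>0 \<Phi>1 K \<theta> h)"
  using assms unfolding next_prob_def Let_def ar_prob_def zf_def by auto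

lemma next_prob_half:
  assumes "length h < K" "length h \<ge> 1"
  shows "next_prob \<Phi>0 \<Phi>1 K \<theta> h = 1/2"
  using assms unfolding next_prob_def Let_def by auto

lemma zf_diff:
  "zf \<Phi>0 \<Phi>1 K \<theta> h - zf \<Phi>0 \<Phi>1 K t h = - (\<Sum>k\<in>{1..K}. (t k - \<theta> k) \<bullet> feat \<Phi>0 \<Phi>1 (h ! (length h - k)))"
  unfolding zf_def by (simp add: sum_subtractf[symmetric] inner_diff_left sum_negf[symmetric])

lemma norm_feat: "norm \<Phi>0 = 1 \<Longrightarrow> norm \<Phi>1 = 1 \<Longrightarrow> norm (feat \<Phi>0 \<Phi>1 b) = 1"
  unfolding feat_def by auto

section \<open>Log-likelihood bound\<close>

lemma ln_sigmoid_bound: "\<bar>ln (sigmoid z)\<bar> \<le> 1 + \<bar>z\<bar>" "\<bar>ln (1 - sigmoid z)\<bar> \<le> 1 + \<bar>z\<bar>"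
proof -
  have g: "0 \<le> ln (1 + exp x) \<and> ln (1 + exp x) \<le> 1 + \<bar>x\<bar>" for x :: real
  proof -
    have e: "exp x > 0" by simp
    have "1 + exp x \<le> 2 * exp \<bar>x\<bar>"
    proof (cases "x \<ge> 0")
      case True
      then have "1 \<le> exp x" by simp
      then show ?thesis using True by simp
    next
      case False
      then have "exp x \<le> 1" "1 \<le> exp (- x)" by auto
      then show ?thesis using False by linarith
    qed
    also have "\<dots> \<le> exp 1 * exp \<bar>x\<bar>" using exp_ge_add_one_self[of 1] by (intro mult_right_mono) auto
    also have "\<dots> = exp (1 + \<bar>x\<bar>)" by (simp add: exp_add)
    finally have le: "1 + exp x \<le> exp (1 + \<bar>x\<bar>)" .
    have "ln (1 + exp x) \<le> ln (exp (1 + \<bar>x\<bar>))"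
      using le e by (subst ln_le_cancel_iff) (auto simp: add_pos_pos)
    then have "ln (1 + exp x) \<le> 1 + \<bar>x\<bar>" by simp
    moreover have "0 \<le> ln (1 + exp x)" using e by simp
    ultimately show ?thesis by simp
  qed
  have e: "1 + exp (- z) > 0" "1 + exp z > 0" using exp_gt_zero[of "-z"] exp_gt_zero[of z] by linarith+
  have "ln (sigmoid z) = - ln (1 + exp (- z))" unfolding sigmoid_def using e by (simp add: ln_div)
  then show "\<bar>ln (sigmoid z)\<bar> \<le> 1 + \<bar>z\<bar>" using g[of "-z"] by simp
  have "1 - sigmoid z = 1 / (1 + exp z)" unfolding sigmoid_def using e by (simp add: field_simps exp_minus)
  then have "ln (1 - sigmoid z) = - ln (1 + exp z)" using e by (simp add: ln_div)
  then show "\<bar>ln (1 - sigmoid z)\<bar> \<le> 1 + \<bar>z\<bar>" using g[of z] by simp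
qed

definition Q2 :: "nat \<Rightarrow> (nat \<Rightarrow> real^'d) \<Rightarrow> real" where
  "Q2 K t = (\<Sum>k\<in>{1..K}. (norm (t k))^2)"

lemma Q2_nonneg: "Q2 K t \<ge> 0" unfolding Q2_def by (simp add: sum_nonneg)

lemma lin_bound:
  assumes v: "\<And>k. norm (v k) = 1"
  shows "\<bar>\<Sum>k\<in>{1..K}. t k \<bullet> v k\<bar> \<le> real K + Q2 K t"
proof -
  have "\<bar>\<Sum>k\<in>{1..K}. t k \<bullet> v k\<bar> \<le> (\<Sum>k\<in>{1..K}. \<bar>t k \<bullet> v k\<bar>)" by (rule sum_abs)
  also have "\<dots> \<le> (\<Sum>k\<in>{1..K}. 1 + (norm (t k))^2)"
  proof (rule sum_mono)
    fix k
    have "\<bar>t k \<bullet> v k\<bar> \<le> norm (t k) * norm (v k)" by (rule Cauchy_Schwarz_ineq2)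
    also have "\<dots> = norm (t k)" using v by simp
    also have "\<dots> \<le> 1 + (norm (t k))^2"
      using sum_squares_ge_zero[of "norm (t k) - 1" 0] by (simp add: power2_eq_square algebra_simps)
        (smt (verit, ccfv_threshold) norm_ge_zero power2_eq_square zero_le_square)
    finally show "\<bar>t k \<bullet> v k\<bar> \<le> 1 + (norm (t k))^2" .
  qed
  also have "\<dots> = real K + Q2 K t" unfolding Q2_def by (simp add: sum.distrib)
  finally show ?thesis .
qed


context
  fixes \<Phi>0 \<Phi>1 :: "real^'d::finite" and K :: nat
  assumes K: "K > 0" and n0: "norm \<Phi>0 = 1" and n1: "norm \<Phi>1 = 1"
begin

abbreviation "PR \<equiv> (theta_prior K :: (nat \<Rightarrow> real^'d) measure)"
abbreviation "lik \<theta> h \<equiv> hist_lik \<Phi>0 \<Phi>1 K \<theta> h"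
abbreviation "nx \<theta> h \<equiv> next_prob \<Phi>0 \<Phi>1 K \<theta> h"
abbreviation "mm h \<equiv> (\<integral>\<theta>. lik \<theta> h \<partial>PR)"
abbreviation "pp h \<equiv> pred_prob \<Phi>0 \<Phi>1 K h"

lemma PR_prob: "prob_space PR" by (rule prob_space_theta_prior[OF K])

lemma lik_int: "integrable PR (\<lambda>\<theta>. lik \<theta> h)"
proof -
  interpret prob_space PR by (rule PR_prob)
  show ?thesis
    by (rule integrable_const_bound[where B=1]) (auto simp: hist_lik_meas abs_le_iff hist_lik_le1 less_imp_le[OF hist_lik_pos])
qed

lemma lik_nx_int: "integrable PR (\<lambda>\<theta>. lik \<theta> h * nx \<theta> h)"
proof -
  interpret prob_space PR by (rule PR_prob)
  have "\<bar>lik \<theta> h * nx \<theta> h\<bar> \<le> 1" for \<theta>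
    using hist_lik_le1[of \<Phi>0 \<Phi>1 K \<theta> h] hist_lik_pos[of \<Phi>0 \<Phi>1 K \<theta> h] next_prob_bounds[of \<Phi>0 \<Phi>1 K \<theta> h]
    by (simp add: abs_mult mult_le_one)
  then show ?thesis
    by (intro integrable_const_bound[where B=1]) (auto intro!: borel_measurable_times hist_lik_meas next_prob_meas)
qed

lemma int_pos:
  fixes f :: "(nat \<Rightarrow> real^'d) \<Rightarrow> real"
  assumes "integrable PR f" "\<And>\<theta>. f \<theta> > 0"
  shows "(\<integral>\<theta>. f \<theta> \<partial>PR) > 0"
proof -
  interpret prob_space PR by (rule PR_prob)
  have ge: "(\<integral>\<theta>. f \<theta> \<partial>PR) \<ge> 0" by (rule Bochner_Integration.integral_nonneg) (simp add: less_imp_le assms(2))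
  have "(\<integral>\<theta>. f \<theta> \<partial>PR) \<noteq> 0"
  proof
    assume "(\<integral>\<theta>. f \<theta> \<partial>PR) = 0"
    then have "AE \<theta> in PR. f \<theta> = 0"
      using assms by (subst integral_nonneg_eq_0_iff_AE[symmetric]) (auto intro: less_imp_le)
    then have "AE \<theta> in PR. False" using assms(2) by (auto elim: AE_mp simp: less_le)
    then show False by simp
  qed
  then show ?thesis using ge by simp
qed

lemma m_pos: "mm h > 0"
  by (rule int_pos[OF lik_int hist_lik_pos])

lemma m_rec:
  assumes h: "length h \<ge> 1"
  shows "mm (h @ [True]) = mm h * pp h" "mm (h @ [False]) = mm h * (1 - pp h)" "0 < pp h" "pp h < 1"
proof -
  have mT: "mm (h @ [True]) = (\<integral>\<theta>. lik \<theta> h * nx \<theta> h \<partial>PR)"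
    by (simp add: hist_lik_snoc[OF K h])
  have mF: "mm (h @ [False]) = mm h - (\<integral>\<theta>. lik \<theta> h * nx \<theta> h \<partial>PR)"
    by (simp add: hist_lik_snoc[OF K h] right_diff_distrib lik_int lik_nx_int)
  have pp: "pp h = (\<integral>\<theta>. lik \<theta> h * nx \<theta> h \<partial>PR) / mm h" unfolding pred_prob_def ..
  show "mm (h @ [True]) = mm h * pp h" unfolding mT pp using m_pos[of h] by simp
  show "mm (h @ [False]) = mm h * (1 - pp h)" unfolding mF pp using m_pos[of h] by (simp add: field_simps)
  show "0 < pp h" unfolding pp using m_pos[of h] m_pos[of "h @ [True]"] mT by simp
  show "pp h < 1" unfolding pp using m_pos[of h] m_pos[of "h @ [False]"] mF by simp
qed

lemma lik_sum1: "n \<ge> 1 \<Longrightarrow> (\<Sum>h\<in>{h. length h = n}. lik \<theta> h) = 1"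
proof (induction n rule: dec_induct)
  case base
  have e: "{h::bool list. length h = 0} = {[]}" by auto
  have a: "lik \<theta> [True] = 1/2" by (rule hist_lik_len1[OF K]) simp
  have b: "lik \<theta> [False] = 1/2" by (rule hist_lik_len1[OF K]) simp
  show ?case
    using hist_split[of "\<lambda>h. lik \<theta> h" 0] by (simp add: e a b)
next
  case (step n)
  have "(\<Sum>h\<in>{h. length h = Suc n}. lik \<theta> h) = (\<Sum>h\<in>{h. length h = n}. lik \<theta> h)"
    unfolding hist_split
    by (intro sum.cong refl) (use step in \<open>simp add: hist_lik_snoc[OF K] algebra_simps\<close>)
  then show ?case using step by simp
qed


lemma xlnx_bound: "0 < x \<Longrightarrow> x \<le> 1 \<Longrightarrow> \<bar>x * ln x\<bar> \<le> (1::real)"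
proof -
  assume x: "0 < x" "x \<le> 1"
  have "ln x \<le> 0" using x by simp
  moreover have "- ln x \<le> 1 / x - 1" using ln_le_minus_one[of "1/x"] x by (simp add: ln_div)
  have a: "x * (- ln x) \<le> x * (1/x - 1)" using x \<open>- ln x \<le> 1 / x - 1\<close> by (intro mult_left_mono) auto
  have b: "0 \<le> x * (- ln x)" using x \<open>ln x \<le> 0\<close> by (intro mult_nonneg_nonneg) auto
  have c: "x * (1/x - 1) = 1 - x" using x by (simp add: field_simps)
  show ?thesis using a b c x by (simp add: abs_if)
qed

lemma kl_bound:
  assumes p: "0 < p" "p < 1" and q: "0 < q" "q < 1"
  shows "\<bar>kl_bern p q\<bar> \<le> 2 + \<bar>ln q\<bar> + \<bar>ln (1 - q)\<bar>"
proof -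
  have e: "kl_bern p q = p * ln p + (1 - p) * ln (1 - p) - p * ln q - (1 - p) * ln (1 - q)"
    unfolding kl_bern_def using p q by (simp add: ln_div algebra_simps)
  have a: "\<bar>p * ln p\<bar> \<le> 1" "\<bar>(1 - p) * ln (1 - p)\<bar> \<le> 1" using p by (auto intro: xlnx_bound)
  have b: "\<bar>p * ln q\<bar> \<le> \<bar>ln q\<bar>" "\<bar>(1 - p) * ln (1 - q)\<bar> \<le> \<bar>ln (1 - q)\<bar>"
    using p by (auto simp: abs_mult intro!: mult_left_le_one_le)
  show ?thesis unfolding e using a b by linarith
qed

declare hist_lik_meas[measurable] next_prob_meas[measurable]

definition FF :: "nat \<Rightarrow> (nat \<Rightarrow> real^'d) \<Rightarrow> real" where
  "FF n \<theta> = (\<Sum>h\<in>{h. length h = n}. lik \<theta> h * ln (lik \<theta> h / mm h))"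

lemma FF_int: "integrable PR (FF n)"
proof -
  interpret prob_space PR by (rule PR_prob)
  have i: "integrable PR (\<lambda>\<theta>. lik \<theta> h * ln (lik \<theta> h / mm h))" for h
  proof (rule integrable_const_bound[where B="1 + \<bar>ln (mm h)\<bar>"])
    show "AE \<theta> in PR. norm (lik \<theta> h * ln (lik \<theta> h / mm h)) \<le> 1 + \<bar>ln (mm h)\<bar>"
    proof (rule AE_I2)
      fix \<theta>
      have l: "0 < lik \<theta> h" "lik \<theta> h \<le> 1" by (rule hist_lik_pos, rule hist_lik_le1)
      have "lik \<theta> h * ln (lik \<theta> h / mm h) = lik \<theta> h * ln (lik \<theta> h) - lik \<theta> h * ln (mm h)"
        using l m_pos[of h] by (simp add: ln_div algebra_simps)
      moreover have "\<bar>lik \<theta> h * ln (lik \<theta> h)\<bar> \<le> 1" using l by (rule xlnx_bound)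
      moreover have "\<bar>lik \<theta> h * ln (mm h)\<bar> \<le> \<bar>ln (mm h)\<bar>" using l by (simp add: abs_mult mult_left_le_one_le)
      ultimately show "norm (lik \<theta> h * ln (lik \<theta> h / mm h)) \<le> 1 + \<bar>ln (mm h)\<bar>" by simp
    qed
  qed measurable
  show ?thesis unfolding FF_def[abs_def] by (rule Bochner_Integration.integrable_sum) (rule i)
qed

lemma likkl_int: "integrable PR (\<lambda>\<theta>. lik \<theta> h * kl_bern (nx \<theta> h) c)" if c: "0 < c" "c < 1" for c
proof -
  interpret prob_space PR by (rule PR_prob)
  show ?thesis
  proof (rule integrable_const_bound[where B="2 + \<bar>ln c\<bar> + \<bar>ln (1 - c)\<bar>"])
    show "AE \<theta> in PR. norm (lik \<theta> h * kl_bern (nx \<theta> h) c) \<le> 2 + \<bar>ln c\<bar> + \<bar>ln (1 - c)\<bar>"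
    proof (rule AE_I2)
      fix \<theta>
      have l: "0 < lik \<theta> h" "lik \<theta> h \<le> 1" by (rule hist_lik_pos, rule hist_lik_le1)
      have k: "\<bar>kl_bern (nx \<theta> h) c\<bar> \<le> 2 + \<bar>ln c\<bar> + \<bar>ln (1 - c)\<bar>"
        by (rule kl_bound[OF next_prob_bounds c])
      have "\<bar>lik \<theta> h * kl_bern (nx \<theta> h) c\<bar> \<le> \<bar>kl_bern (nx \<theta> h) c\<bar>"
        using l by (simp add: abs_mult mult_left_le_one_le)
      then show "norm (lik \<theta> h * kl_bern (nx \<theta> h) c) \<le> 2 + \<bar>ln c\<bar> + \<bar>ln (1 - c)\<bar>" using k by simp
    qed
  qed (unfold kl_bern_def, measurable)
qed

lemma FF_step:
  assumes n: "n \<ge> 1"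
  shows "FF (Suc n) \<theta> = FF n \<theta> + (\<Sum>h\<in>{h. length h = n}. lik \<theta> h * kl_bern (nx \<theta> h) (pp h))"
  unfolding FF_def
proof (rule tele)
  fix h :: "bool list" assume h: "length h = n"
  then have h1: "length h \<ge> 1" using n by simp
  show "lik \<theta> h > 0 \<and> mm h > 0 \<and> 0 < nx \<theta> h \<and> nx \<theta> h < 1 \<and> 0 < pp h \<and> pp h < 1"
    using hist_lik_pos m_pos next_prob_bounds m_rec(3,4)[OF h1] by auto
  show "lik \<theta> (h @ [True]) = lik \<theta> h * nx \<theta> h" by (simp add: hist_lik_snoc[OF K h1])
  show "lik \<theta> (h @ [False]) = lik \<theta> h * (1 - nx \<theta> h)" by (simp add: hist_lik_snoc[OF K h1])
  show "mm (h @ [True]) = mm h * pp h" by (rule m_rec(1)[OF h1])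
  show "mm (h @ [False]) = mm h * (1 - pp h)" by (rule m_rec(2)[OF h1])
qed

lemma A_step:
  assumes n: "n \<ge> 1"
  shows "(\<integral>\<theta>. FF (Suc n) \<theta> \<partial>PR) = (\<integral>\<theta>. FF n \<theta> \<partial>PR) + (\<Sum>h\<in>{h. length h = n}. \<integral>\<theta>. lik \<theta> h * kl_bern (nx \<theta> h) (pp h) \<partial>PR)"
proof -
  have i: "h \<in> {h. length h = n} \<Longrightarrow> integrable PR (\<lambda>\<theta>. lik \<theta> h * kl_bern (nx \<theta> h) (pp h))" for h
    using m_rec(3,4)[of h] n by (intro likkl_int) auto
  have s: "(\<integral>\<theta>. (\<Sum>h\<in>{h. length h = n}. lik \<theta> h * kl_bern (nx \<theta> h) (pp h)) \<partial>PR)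
     = (\<Sum>h\<in>{h. length h = n}. \<integral>\<theta>. lik \<theta> h * kl_bern (nx \<theta> h) (pp h) \<partial>PR)"
    by (rule Bochner_Integration.integral_sum) (rule i)
  show ?thesis
    unfolding FF_step[OF n]
    by (subst Bochner_Integration.integral_add) (auto intro: FF_int i simp: s)
qed

lemma A_one: "(\<integral>\<theta>. FF 1 \<theta> \<partial>PR) = 0"
proof -
  interpret prob_space PR by (rule PR_prob)
  have l: "lik \<theta> h = 1/2" if "length h = 1" for \<theta> h using hist_lik_len1[OF K that] .
  have m: "mm h = 1/2" if "length h = 1" for h
  proof -
    have "(\<lambda>\<theta>. lik \<theta> h) = (\<lambda>_. 1/2)" using l[OF that] by (rule ext)
    then show ?thesis by (simp add: prob_space)
  qed
  have "FF 1 \<theta> = 0" for \<theta> unfolding FF_def by (intro sum.neutral) (auto simp: l m prob_space)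
  then show ?thesis by simp
qed

lemma est_error_eq:
  assumes T: "T > 0"
  shows "est_error \<Phi>0 \<Phi>1 K T = (\<integral>\<theta>. FF (T + 1) \<theta> \<partial>PR) / real T"
proof -
  have "(\<Sum>t<T. \<Sum>h\<in>{h :: bool list. length h = t + 1}. \<integral>\<theta>. lik \<theta> h * kl_bern (nx \<theta> h) (pp h) \<partial>PR)
      = (\<Sum>t<T. (\<integral>\<theta>. FF (Suc (t + 1)) \<theta> \<partial>PR) - (\<integral>\<theta>. FF (t + 1) \<theta> \<partial>PR))"
    by (intro sum.cong refl) (subst A_step, auto)
  also have "\<dots> = (\<integral>\<theta>. FF (T + 1) \<theta> \<partial>PR) - (\<integral>\<theta>. FF 1 \<theta> \<partial>PR)"
    using sum_lessThan_telescope[of "\<lambda>t. (\<integral>\<theta>. FF (t + 1) \<theta> \<partial>PR)" T] by simp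
  finally show ?thesis unfolding est_error_def A_one by simp
qed


lemma ln_lik_bound: "\<exists>C\<ge>0. \<forall>t. \<bar>ln (lik t h)\<bar> \<le> C * (1 + Q2 K t)"
proof -
  define S where "S = {K - 1..<length h - 1}"
  define f where "f t s = (if h ! (s + 1) then ar_prob \<Phi>0 \<Phi>1 K t (take (s + 1) h) s else 1 - ar_prob \<Phi>0 \<Phi>1 K t (take (s + 1) h) s)" for t s
  define c where "c = real (card S)"
  have hl: "lik t h = (1/2)^(min K (length h)) * prod (f t) S" for t
    unfolding hist_lik_def f_def S_def by simp
  have fpos: "f t s > 0" for t s unfolding f_def using ar_prob_bounds by auto
  have fb: "\<bar>ln (f t s)\<bar> \<le> 1 + (real K + Q2 K t)" for t s
  proof -
    define z where "z = (\<Sum>k\<in>{1..K}. t k \<bullet> feat \<Phi>0 \<Phi>1 (take (s + 1) h ! (s + 1 - k)))"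
    have ar: "ar_prob \<Phi>0 \<Phi>1 K t (take (s + 1) h) s = sigmoid z" unfolding ar_prob_def z_def ..
    have zb: "\<bar>z\<bar> \<le> real K + Q2 K t" unfolding z_def by (rule lin_bound) (simp add: norm_feat[OF n0 n1])
    show ?thesis unfolding f_def ar using ln_sigmoid_bound[of z] zb by auto
  qed
  have "\<bar>ln (lik t h)\<bar> \<le> (real K + c * (2 + real K)) * (1 + Q2 K t)" for t
  proof -
    have pp: "prod (f t) S > 0" by (rule prod_pos) (simp add: fpos less_imp_le)
    have "ln (lik t h) = ln ((1/2)^(min K (length h))) + ln (prod (f t) S)"
      unfolding hl by (rule ln_mult_pos) (simp_all add: pp)
    also have "ln ((1/2::real)^(min K (length h))) = real (min K (length h)) * ln (1/2)"
      by (rule ln_realpow)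
    also have "ln (prod (f t) S) = (\<Sum>s\<in>S. ln (f t s))"
      by (rule ln_prod) (simp_all add: S_def less_imp_neq[OF fpos, symmetric])
    finally have "ln (lik t h) = real (min K (length h)) * ln (1/2) + (\<Sum>s\<in>S. ln (f t s))" .
    then have "\<bar>ln (lik t h)\<bar> = \<bar>real (min K (length h)) * ln (1/2) + (\<Sum>s\<in>S. ln (f t s))\<bar>" by simp
    also have "\<dots> \<le> \<bar>real (min K (length h)) * ln (1/2)\<bar> + \<bar>\<Sum>s\<in>S. ln (f t s)\<bar>" by (rule abs_triangle_ineq)
    also have "\<dots> \<le> real (min K (length h)) * \<bar>ln (1/2)\<bar> + (\<Sum>s\<in>S. \<bar>ln (f t s)\<bar>)"
      by (intro add_mono) (simp_all add: abs_mult sum_abs)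
    also have "\<dots> \<le> real K * 1 + (\<Sum>s\<in>S. 1 + (real K + Q2 K t))"
    proof (intro add_mono mult_mono sum_mono fb)
      show "\<bar>ln (1/2::real)\<bar> \<le> 1" using ln_2_less_1 by (simp add: ln_div)
    qed auto
    also have "\<dots> = real K + c * (1 + real K + Q2 K t)" unfolding c_def by simp
    also have "\<dots> \<le> (real K + c * (2 + real K)) * (1 + Q2 K t)"
      using Q2_nonneg[of K t] by (simp add: c_def algebra_simps mult_nonneg_nonneg)
    finally show ?thesis .
  qed
  moreover have "real K + c * (2 + real K) \<ge> 0" unfolding c_def by simp
  ultimately show ?thesis by blast
qed

lemma Q2_expand: "Q2 K t = (\<Sum>k\<in>{1..K}. \<Sum>i\<in>UNIV. (t k $ i)^2)"
  unfolding Q2_def power2_norm_eq_inner inner_vec_def by (simp add: power2_eq_square)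

context
  fixes s :: real and \<theta> :: "nat \<Rightarrow> real^'d"
  assumes s: "s > 0"
begin

abbreviation "ww t \<equiv> wt K s \<theta> t"

lemma ww_int: "integrable PR ww" using W0(1)[OF K s] .
lemma ww_one: "(\<integral>t. ww t \<partial>PR) = 1" using W0(2)[OF K s] .
lemma ww_meas[measurable]: "ww \<in> borel_measurable PR" using ww_int by (rule borel_measurable_integrable)

lemma wwQ2_int: "integrable PR (\<lambda>t. ww t * Q2 K t)"
proof -
  have "(\<lambda>t. ww t * Q2 K t) = (\<lambda>t. \<Sum>k\<in>{1..K}. \<Sum>i\<in>UNIV. ww t * (t k $ i)^2)"
    unfolding Q2_expand by (simp add: sum_distrib_left)
  moreover have "integrable PR (\<lambda>t. \<Sum>k\<in>{1..K}. \<Sum>i\<in>UNIV. ww t * (t k $ i)^2)"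
    by (intro Bochner_Integration.integrable_sum W_x2(1)[OF K s]) auto
  ultimately show ?thesis by simp
qed

lemma wwlnlik_int: "integrable PR (\<lambda>t. ww t * ln (lik t h))"
proof -
  obtain C where C: "C \<ge> 0" "\<And>t. \<bar>ln (lik t h)\<bar> \<le> C * (1 + Q2 K t)" using ln_lik_bound by blast
  show ?thesis
  proof (rule Bochner_Integration.integrable_bound)
    show "integrable PR (\<lambda>t. C * ww t + C * (ww t * Q2 K t))"
      using ww_int wwQ2_int by auto
    show "(\<lambda>t. ww t * ln (lik t h)) \<in> borel_measurable PR" by measurable
    show "AE t in PR. norm (ww t * ln (lik t h)) \<le> norm (C * ww t + C * (ww t * Q2 K t))"
    proof (rule AE_I2)
      fix t
      have w: "ww t > 0" using wt_pos[OF K s] .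
      have "norm (ww t * ln (lik t h)) = ww t * \<bar>ln (lik t h)\<bar>" using w by (simp add: abs_mult)
      also have "\<dots> \<le> ww t * (C * (1 + Q2 K t))" using C(2)[of t] w by (intro mult_left_mono) auto
      also have "\<dots> = C * ww t + C * (ww t * Q2 K t)" by (simp add: algebra_simps)
      also have "\<dots> \<le> norm (C * ww t + C * (ww t * Q2 K t))" by simp
      finally show "norm (ww t * ln (lik t h)) \<le> norm (C * ww t + C * (ww t * Q2 K t))" .
    qed
  qed
qed

definition "KLw = (\<integral>t. ww t * ln (ww t) \<partial>PR)"

lemma jensen_h: "ln (mm h) \<ge> (\<integral>t. ww t * ln (lik t h) \<partial>PR) - KLw"
proof -
  define M where "M = mm h"
  have M: "M > 0" unfolding M_def by (rule m_pos)
  have pt: "ww t * ln (lik t h) - ww t * ln (ww t) \<le> ln M * ww t + (1 / M) * lik t h - ww t" for t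
  proof -
    have w: "ww t > 0" using wt_pos[OF K s] .
    have l: "lik t h > 0" by (rule hist_lik_pos)
    have "ln ((lik t h / ww t) / M) \<le> (lik t h / ww t) / M - 1"
      by (rule ln_le_minus_one) (use w l M in simp)
    then have "ln (lik t h) - ln (ww t) - ln M \<le> lik t h / (ww t * M) - 1"
      using w l M by (simp add: ln_div ln_mult)
    then have "ww t * (ln (lik t h) - ln (ww t) - ln M) \<le> ww t * (lik t h / (ww t * M) - 1)"
      using w by (intro mult_left_mono) auto
    moreover have "ww t * (lik t h / (ww t * M) - 1) = (1/M) * lik t h - ww t" using w M by (simp add: field_simps)
    moreover have "ww t * (ln (lik t h) - ln (ww t) - ln M) = ww t * ln (lik t h) - ww t * ln (ww t) - ln M * ww t"
      by (simp add: algebra_simps)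
    ultimately show ?thesis by linarith
  qed
  have "(\<integral>t. ww t * ln (lik t h) - ww t * ln (ww t) \<partial>PR) \<le> (\<integral>t. ln M * ww t + (1 / M) * lik t h - ww t \<partial>PR)"
  proof (rule integral_mono)
    show "integrable PR (\<lambda>t. ww t * ln (lik t h) - ww t * ln (ww t))"
      by (intro Bochner_Integration.integrable_diff wwlnlik_int W_lnw(1)[OF K s])
    show "integrable PR (\<lambda>t. ln M * ww t + (1 / M) * lik t h - ww t)"
      by (intro Bochner_Integration.integrable_diff Bochner_Integration.integrable_add
          Bochner_Integration.integrable_mult_right ww_int lik_int)
    show "ww t * ln (lik t h) - ww t * ln (ww t) \<le> ln M * ww t + (1 / M) * lik t h - ww t" for t by (rule pt)
  qed
  also have "\<dots> = ln M * 1 + (1 / M) * M - 1"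
  proof -
    have i1: "integrable PR (\<lambda>t. ln M * ww t)" by (intro Bochner_Integration.integrable_mult_right ww_int)
    have i2: "integrable PR (\<lambda>t. (1 / M) * lik t h)" by (intro Bochner_Integration.integrable_mult_right lik_int)
    have "(\<integral>t. ln M * ww t + (1 / M) * lik t h - ww t \<partial>PR) = (\<integral>t. ln M * ww t + (1 / M) * lik t h \<partial>PR) - (\<integral>t. ww t \<partial>PR)"
      by (rule Bochner_Integration.integral_diff) (intro Bochner_Integration.integrable_add i1 i2, rule ww_int)
    also have "(\<integral>t. ln M * ww t + (1 / M) * lik t h \<partial>PR) = (\<integral>t. ln M * ww t \<partial>PR) + (\<integral>t. (1 / M) * lik t h \<partial>PR)"
      by (rule Bochner_Integration.integral_add[OF i1 i2])
    finally show ?thesis unfolding M_def using ww_one by simp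
  qed
  also have "\<dots> = ln M" using M by simp
  finally have X: "(\<integral>t. ww t * ln (lik t h) - ww t * ln (ww t) \<partial>PR) \<le> ln M" .
  moreover have "(\<integral>t. ww t * ln (lik t h) - ww t * ln (ww t) \<partial>PR) = (\<integral>t. ww t * ln (lik t h) \<partial>PR) - KLw"
    unfolding KLw_def by (rule Bochner_Integration.integral_diff[OF wwlnlik_int W_lnw(1)[OF K s]])
  ultimately show ?thesis unfolding M_def by linarith
qed


definition "DD n t = (\<Sum>h\<in>{h. length h = n}. lik \<theta> h * ln (lik \<theta> h / lik t h))"

lemma ln_lik_div: "ln (lik \<theta> h / lik t h) = ln (lik \<theta> h) - ln (lik t h)"
  using hist_lik_pos[of \<Phi>0 \<Phi>1 K \<theta> h] hist_lik_pos[of \<Phi>0 \<Phi>1 K t h] by (simp add: ln_div)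

lemma wwDD_eq: "(\<lambda>t. ww t * DD n t) = (\<lambda>t. \<Sum>h\<in>{h. length h = n}. lik \<theta> h * (ln (lik \<theta> h) * ww t - ww t * ln (lik t h)))"
  unfolding DD_def ln_lik_div by (simp add: sum_distrib_left algebra_simps)

lemma wwDD_int: "integrable PR (\<lambda>t. ww t * DD n t)"
  unfolding wwDD_eq
  by (intro Bochner_Integration.integrable_sum Bochner_Integration.integrable_mult_right
      Bochner_Integration.integrable_diff wwlnlik_int ww_int)

lemma wwDD_integral: "(\<integral>t. ww t * DD n t \<partial>PR) = (\<Sum>h\<in>{h. length h = n}. lik \<theta> h * (ln (lik \<theta> h) - (\<integral>t. ww t * ln (lik t h) \<partial>PR)))"
proof -
  have i: "integrable PR (\<lambda>t. lik \<theta> h * (ln (lik \<theta> h) * ww t - ww t * ln (lik t h)))" for h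
    by (intro Bochner_Integration.integrable_mult_right Bochner_Integration.integrable_diff wwlnlik_int ww_int)
  have v: "(\<integral>t. lik \<theta> h * (ln (lik \<theta> h) * ww t - ww t * ln (lik t h)) \<partial>PR) = lik \<theta> h * (ln (lik \<theta> h) - (\<integral>t. ww t * ln (lik t h) \<partial>PR))" for h
  proof -
    have "(\<integral>t. ln (lik \<theta> h) * ww t - ww t * ln (lik t h) \<partial>PR) = (\<integral>t. ln (lik \<theta> h) * ww t \<partial>PR) - (\<integral>t. ww t * ln (lik t h) \<partial>PR)"
      by (intro Bochner_Integration.integral_diff Bochner_Integration.integrable_mult_right ww_int wwlnlik_int)
    then show ?thesis using ww_one by simp
  qed
  show ?thesis unfolding wwDD_eq
    by (subst Bochner_Integration.integral_sum[OF i]) (rule sum.cong[OF refl], rule v)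
qed

lemma FF_le_DD:
  assumes n: "n \<ge> 1"
  shows "FF n \<theta> \<le> (\<integral>t. ww t * DD n t \<partial>PR) + KLw"
proof -
  have "FF n \<theta> = (\<Sum>h\<in>{h. length h = n}. lik \<theta> h * (ln (lik \<theta> h) - ln (mm h)))"
    unfolding FF_def by (intro sum.cong refl) (simp add: ln_divide_pos[OF hist_lik_pos m_pos])
  also have "\<dots> \<le> (\<Sum>h\<in>{h. length h = n}. lik \<theta> h * (ln (lik \<theta> h) - ((\<integral>t. ww t * ln (lik t h) \<partial>PR) - KLw)))"
  proof (intro sum_mono mult_left_mono)
    fix h
    show "ln (lik \<theta> h) - ln (mm h) \<le> ln (lik \<theta> h) - ((\<integral>t. ww t * ln (lik t h) \<partial>PR) - KLw)"
      using jensen_h[of h] by linarith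
    show "0 \<le> lik \<theta> h" by (rule less_imp_le[OF hist_lik_pos])
  qed
  also have "\<dots> = (\<Sum>h\<in>{h. length h = n}. lik \<theta> h * (ln (lik \<theta> h) - (\<integral>t. ww t * ln (lik t h) \<partial>PR))) + KLw * (\<Sum>h\<in>{h. length h = n}. lik \<theta> h)"
    by (simp add: sum_distrib_left sum.distrib[symmetric] algebra_simps)
  also have "\<dots> = (\<integral>t. ww t * DD n t \<partial>PR) + KLw"
    unfolding wwDD_integral lik_sum1[OF n] by simp
  finally show ?thesis .
qed

definition "EE t h = (if K \<le> length h then (zf \<Phi>0 \<Phi>1 K \<theta> h - zf \<Phi>0 \<Phi>1 K t h)^2 / 8 else 0)"

lemma kl_le_EE:
  assumes h: "length h \<ge> 1"
  shows "kl_bern (nx \<theta> h) (nx t h) \<le> EE t h"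
proof (cases "K \<le> length h")
  case True
  have a: "nx \<theta> h = sigmoid (zf \<Phi>0 \<Phi>1 K \<theta> h)" "nx t h = sigmoid (zf \<Phi>0 \<Phi>1 K t h)"
    by (rule next_prob_zf[OF True K])+
  show ?thesis unfolding EE_def a using True kl_sigmoid_quad[of "zf \<Phi>0 \<Phi>1 K \<theta> h" "zf \<Phi>0 \<Phi>1 K t h"]
    by (simp add: power2_commute)
next
  case False
  have lt: "length h < K" using False by simp
  have a: "nx \<theta> h = 1/2" "nx t h = 1/2" by (rule next_prob_half[OF lt h])+
  show ?thesis unfolding EE_def a using False by (simp add: kl_bern_def)
qed

definition "DDB n t = (\<Sum>m\<in>{1..<n}. \<Sum>h\<in>{h. length h = m}. lik \<theta> h * EE t h)"

lemma DD_le: "n \<ge> 1 \<Longrightarrow> DD n t \<le> DDB n t"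
proof (induction n rule: dec_induct)
  case base
  have l: "lik u h = 1/2" if "length h = 1" for u h using hist_lik_len1[OF K that] .
  have "DD 1 t = 0" unfolding DD_def by (intro sum.neutral) (auto simp: l)
  then show ?case unfolding DDB_def by simp
next
  case (step m)
  have "DD (Suc m) t = DD m t + (\<Sum>h\<in>{h. length h = m}. lik \<theta> h * kl_bern (nx \<theta> h) (nx t h))"
    unfolding DD_def
  proof (rule tele)
    fix h :: "bool list" assume h: "length h = m"
    then have h1: "length h \<ge> 1" using step by simp
    show "lik \<theta> h > 0 \<and> lik t h > 0 \<and> 0 < nx \<theta> h \<and> nx \<theta> h < 1 \<and> 0 < nx t h \<and> nx t h < 1"
      using hist_lik_pos next_prob_bounds by auto
    show "lik \<theta> (h @ [True]) = lik \<theta> h * nx \<theta> h" by (simp add: hist_lik_snoc[OF K h1])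
    show "lik \<theta> (h @ [False]) = lik \<theta> h * (1 - nx \<theta> h)" by (simp add: hist_lik_snoc[OF K h1])
    show "lik t (h @ [True]) = lik t h * nx t h" by (simp add: hist_lik_snoc[OF K h1])
    show "lik t (h @ [False]) = lik t h * (1 - nx t h)" by (simp add: hist_lik_snoc[OF K h1])
  qed
  also have "\<dots> \<le> DDB m t + (\<Sum>h\<in>{h. length h = m}. lik \<theta> h * EE t h)"
    using step by (intro add_mono sum_mono mult_left_mono kl_le_EE) (auto simp: less_imp_le[OF hist_lik_pos])
  also have "\<dots> = DDB (Suc m) t" unfolding DDB_def using step by simp
  finally show ?case .
qed

lemma wwEE:
  shows "integrable PR (\<lambda>t. ww t * EE t h)" "(\<integral>t. ww t * EE t h \<partial>PR) \<le> real K * s^2 / 8"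
proof -
  define v where "v k = feat \<Phi>0 \<Phi>1 (h ! (length h - k))" for k
  have eqz: "(zf \<Phi>0 \<Phi>1 K \<theta> h - zf \<Phi>0 \<Phi>1 K t h)^2 = (\<Sum>k\<in>{1..K}. (t k - \<theta> k) \<bullet> v k)^2" for t
    unfolding zf_diff v_def by simp
  have nv: "(\<Sum>k\<in>{1..K}. (norm (v k))^2) = real K" unfolding v_def by (simp add: norm_feat[OF n0 n1])
  have "integrable PR (\<lambda>t. ww t * EE t h) \<and> (\<integral>t. ww t * EE t h \<partial>PR) \<le> real K * s^2 / 8"
  proof (cases "K \<le> length h")
    case True
    have e: "(\<lambda>t. ww t * EE t h) = (\<lambda>t. (1/8) * (ww t * (\<Sum>k\<in>{1..K}. (t k - \<theta> k) \<bullet> v k)^2))"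
      unfolding EE_def eqz using True by (auto simp: field_simps)
    show ?thesis unfolding e using W_lin2[OF K s, of \<theta> v] nv s by (simp add: field_simps)
  next
    case False
    then have e: "(\<lambda>t. ww t * EE t h) = (\<lambda>t. 0)" unfolding EE_def by auto
    show ?thesis unfolding e using s by simp
  qed
  then show "integrable PR (\<lambda>t. ww t * EE t h)" "(\<integral>t. ww t * EE t h \<partial>PR) \<le> real K * s^2 / 8" by auto
qed

lemma wwDDB:
  assumes n: "n \<ge> 1"
  shows "integrable PR (\<lambda>t. ww t * DDB n t)" "(\<integral>t. ww t * DDB n t \<partial>PR) \<le> real (n - 1) * (real K * s^2 / 8)"
proof -
  have e: "(\<lambda>t. ww t * DDB n t) = (\<lambda>t. \<Sum>m\<in>{1..<n}. \<Sum>h\<in>{h. length h = m}. lik \<theta> h * (ww t * EE t h))"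
    unfolding DDB_def by (simp add: sum_distrib_left algebra_simps)
  show i: "integrable PR (\<lambda>t. ww t * DDB n t)" unfolding e
    by (intro Bochner_Integration.integrable_sum Bochner_Integration.integrable_mult_right wwEE(1))
  have "(\<integral>t. ww t * DDB n t \<partial>PR) = (\<Sum>m\<in>{1..<n}. \<Sum>h\<in>{h. length h = m}. lik \<theta> h * (\<integral>t. ww t * EE t h \<partial>PR))"
    unfolding e
    by (subst Bochner_Integration.integral_sum, intro Bochner_Integration.integrable_sum Bochner_Integration.integrable_mult_right wwEE(1))
       (subst Bochner_Integration.integral_sum, auto intro: wwEE(1))
  also have "\<dots> \<le> (\<Sum>m\<in>{1..<n}. \<Sum>h\<in>{h. length h = m}. lik \<theta> h * (real K * s^2 / 8))"
    by (intro sum_mono mult_left_mono wwEE(2)) (auto simp: less_imp_le[OF hist_lik_pos])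
  also have "\<dots> = (\<Sum>m\<in>{1..<n}. (\<Sum>h\<in>{h. length h = m}. lik \<theta> h) * (real K * s^2 / 8))"
    by (simp only: sum_distrib_right)
  also have "\<dots> = (\<Sum>m\<in>{1..<n}. real K * s^2 / 8)"
    by (intro sum.cong refl) (simp add: lik_sum1)
  also have "\<dots> = real (n - 1) * (real K * s^2 / 8)" by simp
  finally show "(\<integral>t. ww t * DDB n t \<partial>PR) \<le> real (n - 1) * (real K * s^2 / 8)" .
qed

lemma FF_bound:
  assumes n: "n \<ge> 1"
  shows "FF n \<theta> \<le> real (n - 1) * (real K * s^2 / 8) + KLw"
proof -
  have "(\<integral>t. ww t * DD n t \<partial>PR) \<le> (\<integral>t. ww t * DDB n t \<partial>PR)"
  proof (rule integral_mono[OF wwDD_int wwDDB(1)[OF n]])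
    fix t show "ww t * DD n t \<le> ww t * DDB n t"
      using DD_le[OF n, of t] wt_pos[OF K s, of \<theta> t] by (intro mult_left_mono) auto
  qed
  then show ?thesis using FF_le_DD[OF n] wwDDB(2)[OF n] by linarith
qed

lemma FF_bound2:
  assumes n: "n \<ge> 1"
  shows "FF n \<theta> \<le> real (n - 1) * (real K * s^2 / 8)
     + (\<Sum>j\<in>{1..K} \<times> (UNIV::'d set). ln (sg K / s) - 1/2 + real K * s^2 / 2 + real K * (\<theta> (fst j) $ snd j)^2 / 2)"
  using FF_bound[OF n] unfolding KLw_def W_lnw(2)[OF K s] .

end

lemma intFF_bound:
  assumes s: "s > 0" and T: "T > 0"
  shows "(\<integral>\<theta>. FF (T + 1) \<theta> \<partial>PR) \<le> real T * (real K * s^2 / 8)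
     + real (K * CARD('d)) * (ln (sg K / s) + real K * s^2 / 2)"
proof -
  interpret prob_space PR by (rule PR_prob)
  define J where "J = {1..K} \<times> (UNIV::'d set)"
  define c1 where "c1 = ln (sg K / s) - 1/2 + real K * s^2 / 2"
  define R where "R \<theta> = real T * (real K * s^2 / 8) + (\<Sum>j\<in>J. c1 + real K / 2 * (\<theta> (fst j) $ snd j)^2)" for \<theta> :: "nat \<Rightarrow> real^'d"
  have sq: "j \<in> J \<Longrightarrow> integrable PR (\<lambda>\<theta>. (\<theta> (fst j) $ snd j)^2)" "j \<in> J \<Longrightarrow> (\<integral>\<theta>. (\<theta> (fst j) $ snd j)^2 \<partial>PR) = 1 / real K" for j
    unfolding J_def by (auto intro: prior_sq[OF K])
  have i2: "j \<in> J \<Longrightarrow> integrable PR (\<lambda>\<theta>. c1 + real K / 2 * (\<theta> (fst j) $ snd j)^2)" for j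
    by (intro Bochner_Integration.integrable_add Bochner_Integration.integrable_mult_right integrable_const sq(1))
  have iR: "integrable PR R" unfolding R_def
    by (rule Bochner_Integration.integrable_add[OF integrable_const Bochner_Integration.integrable_sum[OF i2]])
  have le: "FF (T + 1) \<theta> \<le> R \<theta>" for \<theta>
    using FF_bound2[OF s, where n="T + 1"] unfolding R_def J_def c1_def by (simp add: algebra_simps)
  have "(\<integral>\<theta>. FF (T + 1) \<theta> \<partial>PR) \<le> (\<integral>\<theta>. R \<theta> \<partial>PR)"
    by (rule integral_mono[OF FF_int iR le])
  also have "(\<integral>\<theta>. R \<theta> \<partial>PR) = real T * (real K * s^2 / 8) + (\<Sum>j\<in>J. c1 + 1 / 2)"
  proof -
    have v2: "j \<in> J \<Longrightarrow> (\<integral>\<theta>. c1 + real K / 2 * (\<theta> (fst j) $ snd j)^2 \<partial>PR) = c1 + 1/2" for j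
      using sq[of j] K by (simp add: Bochner_Integration.integral_add prob_space)
    have "(\<integral>\<theta>. R \<theta> \<partial>PR) = (\<integral>\<theta>. real T * (real K * s^2 / 8) \<partial>PR) + (\<integral>\<theta>. (\<Sum>j\<in>J. c1 + real K / 2 * (\<theta> (fst j) $ snd j)^2) \<partial>PR)"
      unfolding R_def by (rule Bochner_Integration.integral_add[OF integrable_const Bochner_Integration.integrable_sum[OF i2]])
    also have "(\<integral>\<theta>. (\<Sum>j\<in>J. c1 + real K / 2 * (\<theta> (fst j) $ snd j)^2) \<partial>PR) = (\<Sum>j\<in>J. c1 + 1/2)"
      by (subst Bochner_Integration.integral_sum[OF i2], assumption) (rule sum.cong[OF refl], erule v2)
    finally show ?thesis by (simp add: prob_space)
  qed
  also have "\<dots> = real T * (real K * s^2 / 8) + real (K * CARD('d)) * (ln (sg K / s) + real K * s^2 / 2)"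
    unfolding J_def c1_def by (simp add: card_cartesian_product)
  finally show ?thesis .
qed

end

theorem mainTheorem12:
  fixes \<Phi>0 \<Phi>1 :: "real^'d" and K T :: nat
  assumes "K > 0" and "T > 0" and "norm \<Phi>0 = 1" and "norm \<Phi>1 = 1"
  shows "est_error \<Phi>0 \<Phi>1 K T
           \<le> real CARD('d) * real K / (2 * real T)
              * (1 + ln (1 + real T / (4 * real CARD('d) * real K)))"
proof -
  note K = assms(1) and T = assms(2) and n0 = assms(3) and n1 = assms(4)
  define D where "D = real CARD('d) * real K"
  have D: "D > 0" unfolding D_def using K by simp
  define u where "u = 4 * D / (4 * D + real T)"
  have u: "u > 0" "u \<le> 1" unfolding u_def using D T by (auto simp: field_simps)
  define s where "s = sqrt (u / real K)"
  have s: "s > 0" unfolding s_def using u K by simp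
  have ks: "real K * s^2 = u" unfolding s_def using u K by simp
  have lnr: "ln (sg K / s) = - ln u / 2"
  proof -
    have "sg K / s = 1 / sqrt u" unfolding sg_def s_def using u K by (simp add: real_sqrt_divide)
    then show ?thesis using u by (simp add: ln_div ln_sqrt)
  qed
  have iu: "1 / u = 1 + real T / (4 * D)" unfolding u_def using D by (simp add: field_simps)
  have b: "(\<integral>\<theta>. FF \<Phi>0 \<Phi>1 K (T + 1) \<theta> \<partial>theta_prior K) \<le> real T * (real K * s^2 / 8)
     + real (K * CARD('d)) * (ln (sg K / s) + real K * s^2 / 2)"
    by (rule intFF_bound[OF K n0 n1 s T])
  also have "\<dots> = u * (real T + 4 * D) / 8 - D * ln u / 2"
    unfolding ks lnr D_def by (simp add: algebra_simps)
  also have "u * (real T + 4 * D) / 8 = D / 2" unfolding u_def using D T by (simp add: field_simps)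
  finally have I: "(\<integral>\<theta>. FF \<Phi>0 \<Phi>1 K (T + 1) \<theta> \<partial>theta_prior K) \<le> D / 2 - D * ln u / 2" .
  have L: "- ln u = ln (1 + real T / (4 * D))" using u by (simp add: iu[symmetric] ln_div)
  have I2: "(\<integral>\<theta>. FF \<Phi>0 \<Phi>1 K (T + 1) \<theta> \<partial>theta_prior K) \<le> D / 2 * (1 + ln (1 + real T / (4 * D)))"
  proof -
    have L': "ln (1 + real T / (4 * D)) = - ln u" using L by simp
    show ?thesis unfolding L' using I by (simp add: algebra_simps)
  qed
  have "est_error \<Phi>0 \<Phi>1 K T = (\<integral>\<theta>. FF \<Phi>0 \<Phi>1 K (T + 1) \<theta> \<partial>theta_prior K) / real T"
    by (rule est_error_eq[OF K n0 n1 T])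
  also have "\<dots> \<le> (D / 2 * (1 + ln (1 + real T / (4 * D)))) / real T"
    using I2 T by (intro divide_right_mono) auto
  also have "\<dots> = real CARD('d) * real K / (2 * real T) * (1 + ln (1 + real T / (4 * real CARD('d) * real K)))"
    unfolding D_def by (simp add: field_simps)
  finally show ?thesis .
qed


end
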